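(* In the setting below, assume that for every $\tau\in\pi_1(\mathcal R)$ the monodromy $M(\tau,\lambda)=\rho(\tau,\lambda)$ lies in $\Lambda\mathrm{SU}_{1,1\sigma}$ and $M(\tau,1)=\mathrm{id}$. Let $\hat f$ be the minimal surface in $\mathrm{Nil}_3$ defined on $\mathcal I_e$ (resp. $\mathcal I_\omega$) by the Sym formula at $\lambda=1$ applied to $F$ (resp. to $\tilde F\omega_0$). Then $\hat f(\tau.z)=\hat f(z)$ for all $z\in\mathcal I_e$ (resp. $\mathcal I_\omega$) and all $\tau\in\pi_1(\mathcal R)$ if and only if for all $\tau$: $X_\tau^o(\lambda=1)=0$ and $Y_\tau^d(\lambda=1)=0$, where $X_\tau=-i\lambda(\partial_\lambda M(\tau,\lambda))M(\tau,\lambda)^{-1}$ and $Y_\tau=-\tfrac12\lambda\partial_\lambda\big(\lambda(\partial_\lambda M(\tau,\lambda))M(\tau,\lambda)^{-1}\big)$, and superscripts $o,d$ denote off-diagonal and diagonal parts.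
   Context: $\sigma_3=\mathrm{diag}(1,-1)$. $\Lambda\mathrm{SL}_2\mathbb C_\sigma$: loops $g:\mathbb S^1\to\mathrm{SL}_2\mathbb C$ with $g(-\lambda)=\sigma_3g(\lambda)\sigma_3$; $\Lambda^+\mathrm{SL}_2\mathbb C_\sigma$: those extending holomorphically to $|\lambda|<1$; $\Lambda\mathrm{SU}_{1,1\sigma}$: those with $\sigma_3({}^t\overline{g(1/\bar\lambda)})^{-1}\sigma_3=g(\lambda)$. Setting: $\mathcal R$ connected non-compact Riemann surface, $\widetilde{\mathcal R}$ its universal cover with deck group $\pi_1(\mathcal R)$; $\eta$ a $\pi_1(\mathcal R)$-invariant holomorphic potential (holomorphic one-form with values in the Lie algebra of $\Lambda\mathrm{SL}_2\mathbb C_\sigma$); $C$ solves $dC=C\eta$ and $C(\tau.z,\lambda)=\rho(\tau,\lambda)C(z,\lambda)$. With $\omega_0=\begin{pmatrix}0&\lambda\\-\lambda^{-1}&0\end{pmatrix}$, $\mathcal I_e$ (resp. $\mathcal I_\omega$) is the set where $C\in\Lambda\mathrm{SU}_{1,1\sigma}\cdot\Lambda^+\mathrm{SL}_2\mathbb C_\sigma$ (resp. $\Lambda\mathrm{SU}_{1,1\sigma}\cdot\omega_0\cdot\Lambda^+\mathrm{SL}_2\mathbb C_\sigma$), with unique decompositions $C=FV_+$, $C=\tilde F\omega_0\tilde V_+$ normalized by positive diagonal of the plus factor at $\lambda=0$. Sym formula: for a $\Lambda\mathrm{SU}_{1,1\sigma}$-valued map $F$ put $f_{\mathbb L_3}=-i\lambda(\partial_\lambda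 F)F^{-1}-\tfrac i2F\sigma_3F^{-1}$ and $\hat f=(f_{\mathbb L_3})^o-\tfrac i2\lambda(\partial_\lambda f_{\mathbb L_3})^d$. At $\lambda=1$, $\hat f\in\mathfrak{su}_{1,1}$; writing $\hat f=x_1\mathcal E_1+x_2\mathcal E_2+x_3\mathcal E_3$ with $\mathcal E_1=\tfrac12\begin{pmatrix}0&i\\-i&0\end{pmatrix}$, $\mathcal E_2=\tfrac12\begin{pmatrix}0&-1\\-1&0\end{pmatrix}$, $\mathcal E_3=\tfrac12\begin{pmatrix}-i&0\\0&i\end{pmatrix}$, the surface is the map to $(x_1,x_2,x_3)\in\mathrm{Nil}_3$, where $\mathrm{Nil}_3$ is $\mathbb R^3$ with group law $(a_1,a_2,a_3)\cdot(x_1,x_2,x_3)=(a_1+x_1,a_2+x_2,a_3+x_3+\tfrac12(a_1x_2-a_2x_1))$. *)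

theory Defs
  imports "HOL-Analysis.Analysis" "HOL-Complex_Analysis.Complex_Analysis"
begin

type_synonym cmat = "complex^2^2"
type_synonym cloop = "complex \<Rightarrow> cmat"

definition mk2 :: "complex \<Rightarrow> complex \<Rightarrow> complex \<Rightarrow> complex \<Rightarrow> cmat" where
  "mk2 a b c d = (\<chi> i j. if i = 1 then (if j = 1 then a else b) else (if j = 1 then c else d))"

definition csm :: "complex \<Rightarrow> cmat \<Rightarrow> cmat" where
  "csm c M = (\<chi> i j. c * M$i$j)"

definition minv :: "cmat \<Rightarrow> cmat" where
  "minv M = csm (inverse (det M)) (mk2 (M$2$2) (- M$1$2) (- M$2$1) (M$1$1))"

definition ctr :: "cmat \<Rightarrow> cmat" where
  "ctr M = (\<chi> i j. cnj (M$j$i))"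

definition offd :: "cmat \<Rightarrow> cmat" where
  "offd M = (\<chi> i j. if i = j then 0 else M$i$j)"

definition diagp :: "cmat \<Rightarrow> cmat" where
  "diagp M = (\<chi> i j. if i = j then M$i$j else 0)"

definition sigma3 :: cmat where
  "sigma3 = mk2 1 0 0 (-1)"

definition omega0 :: cloop where
  "omega0 l = mk2 0 l (- inverse l) 0"

definition mat_holomorphic_on :: "cloop \<Rightarrow> complex set \<Rightarrow> bool" where
  "mat_holomorphic_on G S \<longleftrightarrow> (\<forall>i j. (\<lambda>\<mu>. G \<mu> $ i $ j) holomorphic_on S)"

definition twisted :: "cloop \<Rightarrow> bool" where
  "twisted g \<longleftrightarrow> (\<forall>l\<in>sphere 0 1. g (-l) = sigma3 ** g l ** sigma3)"

definition LoopSL :: "cloop set" where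
  "LoopSL = {g. continuous_on (sphere 0 1) g \<and> (\<forall>l\<in>sphere 0 1. det (g l) = 1) \<and> twisted g}"

definition LoopAlg :: "cloop set" where
  "LoopAlg = {a. continuous_on (sphere 0 1) a \<and> (\<forall>l\<in>sphere 0 1. trace (a l) = 0) \<and> twisted a}"

definition plus_ext :: "cloop \<Rightarrow> cloop \<Rightarrow> bool" where
  "plus_ext g G \<longleftrightarrow> mat_holomorphic_on G (ball 0 1) \<and> continuous_on (cball 0 1) G
     \<and> (\<forall>l\<in>sphere 0 1. G l = g l)"

definition LoopPlus :: "cloop set" where
  "LoopPlus = {g. g \<in> LoopSL \<and> (\<exists>G. plus_ext g G)}"

definition LoopPlusPos :: "cloop set" where
  "LoopPlusPos = {g. g \<in> LoopPlus \<and>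
     (\<exists>G. plus_ext g G \<and> (\<forall>i. G 0 $ i $ i \<in> \<real> \<and> Re (G 0 $ i $ i) > 0))}"

definition LoopSU :: "cloop set" where
  "LoopSU = {g. g \<in> LoopSL \<and>
     (\<forall>l\<in>sphere 0 1. sigma3 ** minv (ctr (g (1 / cnj l))) ** sigma3 = g l)}"

text \<open>For a loop g, (lambda d/dlambda g)(lambda) is computed along the circle:
  d/dt g(lambda e^{it}) at t = 0 equals i lambda g'(lambda).\<close>
definition ldl :: "cloop \<Rightarrow> cloop" where
  "ldl g l = csm (- \<i>) (vector_derivative (\<lambda>t::real. g (l * cis t)) (at 0))"

definition symL3 :: "cloop \<Rightarrow> cloop" where
  "symL3 F l = csm (- \<i>) (ldl F l ** minv (F l)) - csm (\<i> / 2) (F l ** sigma3 ** minv (F l))"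

definition symhat1 :: "cloop \<Rightarrow> cmat" where
  "symhat1 F = offd (symL3 F 1) - csm (\<i> / 2) (ldl (\<lambda>\<mu>. diagp (symL3 F \<mu>)) 1)"

definition Ie :: "complex set \<Rightarrow> (complex \<Rightarrow> cloop) \<Rightarrow> complex set" where
  "Ie D C = {z\<in>D. \<exists>F V. F \<in> LoopSU \<and> V \<in> LoopPlusPos \<and> (\<forall>l\<in>sphere 0 1. C z l = F l ** V l)}"

definition Fe :: "(complex \<Rightarrow> cloop) \<Rightarrow> complex \<Rightarrow> cloop" where
  "Fe C z = (SOME F. F \<in> LoopSU \<and> (\<exists>V. V \<in> LoopPlusPos \<and> (\<forall>l\<in>sphere 0 1. C z l = F l ** V l)))"

definition Iw :: "complex set \<Rightarrow> (complex \<Rightarrow> cloop) \<Rightarrow> complex set" where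
  "Iw D C = {z\<in>D. \<exists>F V. F \<in> LoopSU \<and> V \<in> LoopPlusPos \<and>
      (\<forall>l\<in>sphere 0 1. C z l = F l ** omega0 l ** V l)}"

definition Fw :: "(complex \<Rightarrow> cloop) \<Rightarrow> complex \<Rightarrow> cloop" where
  "Fw C z = (SOME F. F \<in> LoopSU \<and> (\<exists>V. V \<in> LoopPlusPos \<and>
      (\<forall>l\<in>sphere 0 1. C z l = F l ** omega0 l ** V l)))"

text \<open>Minimal surfaces (value of hat f at lambda = 1, an element of su(1,1)
  identified with Nil_3 via the basis E1,E2,E3)\<close>
definition fhat_e :: "(complex \<Rightarrow> cloop) \<Rightarrow> complex \<Rightarrow> cmat" where
  "fhat_e C z = symhat1 (Fe C z)"

definition fhat_w :: "(complex \<Rightarrow> cloop) \<Rightarrow> complex \<Rightarrow> cmat" where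
  "fhat_w C z = symhat1 (\<lambda>l. Fw C z l ** omega0 l)"

definition Xmon :: "cloop \<Rightarrow> cloop" where
  "Xmon M l = csm (- \<i>) (ldl M l ** minv (M l))"

definition Ymon :: "cloop \<Rightarrow> cloop" where
  "Ymon M l = csm (- 1 / 2) (ldl (\<lambda>\<mu>. ldl M \<mu> ** minv (M \<mu>)) l)"

section \<open>Setting: universal cover as a simply connected domain with deck group\<close>

definition deck_group :: "complex set \<Rightarrow> (complex \<Rightarrow> complex) set \<Rightarrow> bool" where
  "deck_group D \<Gamma> \<longleftrightarrow>
     id \<in> \<Gamma> \<and>
     (\<forall>\<sigma>\<in>\<Gamma>. \<forall>\<tau>\<in>\<Gamma>. \<sigma> \<circ> \<tau> \<in> \<Gamma>) \<and>
     (\<forall>\<tau>\<in>\<Gamma>. \<exists>\<sigma>\<in>\<Gamma>. \<forall>z\<in>D. \<sigma> (\<tau> z) = z \<and> \<tau> (\<sigma> z) = z) \<and>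
     (\<forall>\<tau>\<in>\<Gamma>. \<tau> holomorphic_on D \<and> \<tau> ` D = D \<and> inj_on \<tau> D) \<and>
     (\<forall>\<tau>\<in>\<Gamma>. \<forall>z\<in>D. \<tau> z = z \<longrightarrow> (\<forall>w\<in>D. \<tau> w = w)) \<and>
     (\<forall>z\<in>D. \<exists>U. open U \<and> z \<in> U \<and> U \<subseteq> D \<and>
         (\<forall>\<tau>\<in>\<Gamma>. (\<exists>w\<in>D. \<tau> w \<noteq> w) \<longrightarrow> \<tau> ` U \<inter> U = {}))"

definition noncompact_quotient :: "complex set \<Rightarrow> (complex \<Rightarrow> complex) set \<Rightarrow> bool" where
  "noncompact_quotient D \<Gamma> \<longleftrightarrow> \<not> (\<exists>K. compact K \<and> K \<subseteq> D \<and> (\<Union>\<tau>\<in>\<Gamma>. \<tau> ` K) = D)"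

end

theory Submission
  imports Defs
begin

no_notation fps_nth (infixl "$" 75)


lemma cmat_eq_iff: "(A::cmat) = B \<longleftrightarrow> A$1$1 = B$1$1 \<and> A$1$2 = B$1$2 \<and> A$2$1 = B$2$1 \<and> A$2$2 = B$2$2"
  by (auto simp: vec_eq_iff forall_2)

lemma mk2_nth[simp]: "mk2 a b c d $1$1 = a" "mk2 a b c d $1$2 = b" "mk2 a b c d $2$1 = c" "mk2 a b c d $2$2 = d"
  by (simp_all add: mk2_def)

lemma mmult_nth[simp]: "((A::cmat) ** B)$i$j = A$i$1*B$1$j + A$i$2*B$2$j"
  by (simp add: matrix_matrix_mult_def sum_2)

lemma csm_nth[simp]: "csm c M $i$j = c * M$i$j" by (simp add: csm_def)
lemma ctr_nth[simp]: "ctr M $i$j = cnj (M$j$i)" by (simp add: ctr_def)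
lemma offd_nth[simp]: "offd M $1$1 = 0" "offd M $2$2 = 0" "offd M $1$2 = M$1$2" "offd M $2$1 = M$2$1"
  by (simp_all add: offd_def)
lemma diagp_nth[simp]: "diagp M $1$1 = M$1$1" "diagp M $2$2 = M$2$2" "diagp M $1$2 = 0" "diagp M $2$1 = 0"
  by (simp_all add: diagp_def)
lemma mat1_nth[simp]: "(mat 1::cmat) $1$1 = 1" "(mat 1::cmat) $2$2 = 1" "(mat 1::cmat) $1$2 = 0" "(mat 1::cmat) $2$1 = 0"
  by (simp_all add: mat_def)
lemma sigma3_nth[simp]: "sigma3 $1$1 = 1" "sigma3 $2$2 = -1" "sigma3 $1$2 = 0" "sigma3 $2$1 = 0"
  by (simp_all add: sigma3_def)
lemma det_cmat: "det (A::cmat) = A$1$1 * A$2$2 - A$1$2 * A$2$1" by (rule det_2)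
lemma minv_nth[simp]: "minv M $1$1 = M$2$2 / det M" "minv M $2$2 = M$1$1 / det M"
   "minv M $1$2 = - M$1$2 / det M" "minv M $2$1 = - M$2$1 / det M"
  by (simp_all add: minv_def divide_inverse mult.commute)
lemma omega0_nth[simp]: "omega0 l $1$1 = 0" "omega0 l $2$2 = 0" "omega0 l $1$2 = l" "omega0 l $2$1 = - inverse l"
  by (simp_all add: omega0_def)
lemma zero_nth2[simp]: "(0::cmat)$i$j = 0" by simp

lemma test: "det (A::cmat) \<noteq> 0 \<Longrightarrow> minv A ** A = mat 1"
  by (simp add: cmat_eq_iff divide_simps) (simp add: det_cmat algebra_simps)



definition mhd :: "cloop \<Rightarrow> cmat \<Rightarrow> complex \<Rightarrow> bool" where
  "mhd f f' x \<longleftrightarrow> (\<forall>i j. ((\<lambda>y. f y $i$j) has_field_derivative f'$i$j) (at x))"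

definition Dm :: "cloop \<Rightarrow> cloop" where
  "Dm g x = (\<chi> i j. deriv (\<lambda>y. g y $i$j) x)"

lemma mhdD: "mhd f f' x \<Longrightarrow> ((\<lambda>y. f y $i$j) has_field_derivative f'$i$j) (at x)"
  by (simp add: mhd_def)

lemma mhd_mult:
  assumes "mhd f f' x" "mhd g g' x"
  shows "mhd (\<lambda>y. f y ** g y) (f' ** g x + f x ** g') x"
  unfolding mhd_def
proof (intro allI)
  fix i j :: 2
  note d = mhdD[OF assms(1)] mhdD[OF assms(2)]
  show "((\<lambda>y. (f y ** g y) $i$j) has_field_derivative (f' ** g x + f x ** g')$i$j) (at x)"
    apply simp by (rule derivative_eq_intros d | simp add: algebra_simps)+
qed

lemma mhd_add: "mhd f f' x \<Longrightarrow> mhd g g' x \<Longrightarrow> mhd (\<lambda>y. f y + g y) (f' + g') x"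
  unfolding mhd_def by (auto intro!: derivative_eq_intros)

lemma mhd_diff: "mhd f f' x \<Longrightarrow> mhd g g' x \<Longrightarrow> mhd (\<lambda>y. f y - g y) (f' - g') x"
  unfolding mhd_def by (auto intro!: derivative_eq_intros)

lemma mhd_uminus: "mhd f f' x \<Longrightarrow> mhd (\<lambda>y. - f y) (- f') x"
  unfolding mhd_def by (auto intro!: derivative_eq_intros)

lemma mhd_const: "mhd (\<lambda>y. c) 0 x"
  unfolding mhd_def by (auto intro!: derivative_eq_intros)

lemma mhd_csm:
  assumes "(c has_field_derivative c') (at x)" "mhd f f' x"
  shows "mhd (\<lambda>y. csm (c y) (f y)) (csm c' (f x) + csm (c x) f') x"
  unfolding mhd_def
proof (intro allI)
  fix i j :: 2
  note d = mhdD[OF assms(2)] assms(1)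
  show "((\<lambda>y. csm (c y) (f y) $i$j) has_field_derivative (csm c' (f x) + csm (c x) f')$i$j) (at x)"
    apply simp by (rule derivative_eq_intros d | simp add: algebra_simps)+
qed

lemma mhd_offd: "mhd f f' x \<Longrightarrow> mhd (\<lambda>y. offd (f y)) (offd f') x"
  unfolding mhd_def offd_def by (auto intro!: derivative_eq_intros)

lemma mhd_diagp: "mhd f f' x \<Longrightarrow> mhd (\<lambda>y. diagp (f y)) (diagp f') x"
  unfolding mhd_def diagp_def by (auto intro!: derivative_eq_intros)

lemma mhd_minv:
  assumes "mhd f f' x" "det (f x) \<noteq> 0"
  shows "mhd (\<lambda>y. minv (f y)) (- (minv (f x) ** f' ** minv (f x))) x"
proof -
  note d = mhdD[OF assms(1)]
  define dD where "dD = f'$1$1 * f x$2$2 + f x$1$1 * f'$2$2 - (f'$1$2 * f x$2$1 + f x$1$2 * f'$2$1)"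
  have dd: "((\<lambda>y. det (f y)) has_field_derivative dD) (at x)"
    unfolding det_cmat dD_def by (rule derivative_eq_intros d | simp)+
  have q: "((\<lambda>y. N y / det (f y)) has_field_derivative (N' * det (f x) - N x * dD) / (det (f x) * det (f x))) (at x)"
    if "(N has_field_derivative N') (at x)" for N N'
    using DERIV_divide[OF that dd assms(2)] by simp
  have q2: "((\<lambda>y. - N y / det (f y)) has_field_derivative (- N' * det (f x) + N x * dD) / (det (f x) * det (f x))) (at x)"
    if "(N has_field_derivative N') (at x)" for N N'
    using q[OF DERIV_minus[OF that]] by simp
  have nz: "f x$1$1 * f x$2$2 - f x$1$2 * f x$2$1 \<noteq> 0" using assms(2) by (simp add: det_cmat)
  show ?thesis unfolding mhd_def forall_2 minv_nth
    apply (intro conjI)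
       apply (rule DERIV_cong[OF q[OF d]] DERIV_cong[OF q2[OF d]],
              simp add: det_cmat dD_def divide_simps nz, algebra)+
    done
qed

lemma mhd_unique: "mhd f f' x \<Longrightarrow> mhd f f'' x \<Longrightarrow> f' = f''"
  unfolding mhd_def by (simp add: vec_eq_iff) (metis DERIV_unique)

lemma mhol_mhd:
  assumes "mat_holomorphic_on g S" "open S" "x \<in> S"
  shows "mhd g (Dm g x) x"
  using assms unfolding mhd_def mat_holomorphic_on_def Dm_def
  by (auto intro!: holomorphic_derivI)

lemma mhol_Dm:
  assumes "mat_holomorphic_on g S" "open S"
  shows "mat_holomorphic_on (Dm g) S"
  using assms unfolding mat_holomorphic_on_def Dm_def
  by (auto intro!: holomorphic_deriv)

lemma Dm_eq: "mhd f f' x \<Longrightarrow> Dm f x = f'"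
  unfolding mhd_def Dm_def by (auto simp: vec_eq_iff intro: DERIV_imp_deriv)



lemma vd_vec:
  fixes f :: "real \<Rightarrow> 'a::real_normed_vector ^ 'n"
  assumes "\<And>i. ((\<lambda>t. f t $ i) has_vector_derivative f' $ i) (at x)"
  shows "(f has_vector_derivative f') (at x)"
proof -
  have "((\<lambda>y. (1 / norm (y - x)) *\<^sub>R (f y $ i - (f x $ i + (y - x) *\<^sub>R f' $ i))) \<longlongrightarrow> 0) (at x)" for i
    using assms[of i] unfolding has_vector_derivative_def has_derivative_within[of _ _ x UNIV] by simp
  then have "((\<lambda>y. (1 / norm (y - x)) *\<^sub>R (f y - (f x + (y - x) *\<^sub>R f'))) \<longlongrightarrow> 0) (at x)"
    by (intro vec_tendstoI) simp
  then show ?thesis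
    unfolding has_vector_derivative_def has_derivative_within[of _ _ x UNIV]
    by (simp add: bounded_linear_scaleR_left)
qed

lemma vd_cmat:
  fixes f :: "real \<Rightarrow> cmat"
  assumes "\<And>i j. ((\<lambda>t. f t $ i $ j) has_vector_derivative f' $ i $ j) (at x)"
  shows "(f has_vector_derivative f') (at x)"
  by (intro vd_vec assms)

lemma ldl_mhd:
  assumes "mhd g g' l"
  shows "ldl g l = csm l g'"
proof -
  have c: "((\<lambda>t::real. l * cis t) has_vector_derivative (l * \<i>)) (at 0)"
    using has_derivative_cis[OF has_derivative_ident, of 0 UNIV]
    unfolding has_vector_derivative_def
    by (auto intro!: derivative_eq_intros simp: has_vector_derivative_def)
  have "((\<lambda>t. g (l * cis t)) has_vector_derivative (csm (l * \<i>) g')) (at 0)"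
  proof (rule vd_cmat)
    fix i j :: 2
    have "((\<lambda>y. g y $ i $ j) has_field_derivative g' $ i $ j) (at ((\<lambda>t::real. l * cis t) 0))"
      using mhdD[OF assms] by simp
    from field_vector_diff_chain_at[OF c this]
    show "((\<lambda>t. g (l * cis t) $ i $ j) has_vector_derivative csm (l * \<i>) g' $ i $ j) (at 0)"
      by (simp add: o_def)
  qed
  moreover have "\<And>x. - (\<i> * (l * \<i> * x)) = l * x"
  proof -
    fix x
    have "\<i> * (l * \<i> * x) = \<i> * (\<i> * (l * x))" by (simp only: mult.assoc mult.left_commute[of l \<i>])
    then show "- (\<i> * (l * \<i> * x)) = l * x" by simp
  qed
  ultimately show ?thesis unfolding ldl_def
    by (simp add: vector_derivative_at vec_eq_iff csm_def)
qed



lemma ldl_sphere: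
  assumes "norm l = 1" "\<forall>x\<in>sphere 0 1. g x = h x"
  shows "ldl g l = ldl h l"
proof -
  have "(\<lambda>t. g (l * cis t)) = (\<lambda>t. h (l * cis t))"
    using assms by (auto simp: norm_mult)
  then show ?thesis unfolding ldl_def by simp
qed

lemma mhol_mult: "mat_holomorphic_on f S \<Longrightarrow> mat_holomorphic_on g S \<Longrightarrow> mat_holomorphic_on (\<lambda>x. f x ** g x) S"
  unfolding mat_holomorphic_on_def by (auto intro!: holomorphic_intros)
lemma mhol_add: "mat_holomorphic_on f S \<Longrightarrow> mat_holomorphic_on g S \<Longrightarrow> mat_holomorphic_on (\<lambda>x. f x + g x) S"
  unfolding mat_holomorphic_on_def by (auto intro!: holomorphic_intros)
lemma mhol_diff: "mat_holomorphic_on f S \<Longrightarrow> mat_holomorphic_on g S \<Longrightarrow> mat_holomorphic_on (\<lambda>x. f x - g x) S"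
  unfolding mat_holomorphic_on_def by (auto intro!: holomorphic_intros)
lemma mhol_const: "mat_holomorphic_on (\<lambda>x. c) S"
  unfolding mat_holomorphic_on_def by (auto intro!: holomorphic_intros)
lemma mhol_csm: "c holomorphic_on S \<Longrightarrow> mat_holomorphic_on f S \<Longrightarrow> mat_holomorphic_on (\<lambda>x. csm (c x) (f x)) S"
  unfolding mat_holomorphic_on_def by (auto intro!: holomorphic_intros)
lemma mhol_offd: "mat_holomorphic_on f S \<Longrightarrow> mat_holomorphic_on (\<lambda>x. offd (f x)) S"
  unfolding mat_holomorphic_on_def forall_2 by (simp add: holomorphic_intros)
lemma mhol_diagp: "mat_holomorphic_on f S \<Longrightarrow> mat_holomorphic_on (\<lambda>x. diagp (f x)) S"
  unfolding mat_holomorphic_on_def forall_2 by (simp add: holomorphic_intros)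
lemma mhol_minv:
  assumes "mat_holomorphic_on f S" "\<forall>x\<in>S. det (f x) \<noteq> 0"
  shows "mat_holomorphic_on (\<lambda>x. minv (f x)) S"
proof -
  have d: "(\<lambda>x. det (f x)) holomorphic_on S"
    using assms(1) unfolding mat_holomorphic_on_def det_cmat by (auto intro!: holomorphic_intros)
  show ?thesis using assms(1) unfolding mat_holomorphic_on_def forall_2 minv_nth
    by (intro conjI holomorphic_on_divide holomorphic_on_minus d; (simp add: assms(2))?)
qed
lemma mhol_det: "mat_holomorphic_on f S \<Longrightarrow> (\<lambda>x. det (f x)) holomorphic_on S"
  unfolding mat_holomorphic_on_def det_cmat by (auto intro!: holomorphic_intros)

lemma mhol_subset: "mat_holomorphic_on f S \<Longrightarrow> T \<subseteq> S \<Longrightarrow> mat_holomorphic_on f T"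
  unfolding mat_holomorphic_on_def by (auto intro: holomorphic_on_subset)

lemma mhd_transform:
  assumes "mhd f f' x" "open S" "x \<in> S" "\<forall>y\<in>S. f y = g y"
  shows "mhd g f' x"
  unfolding mhd_def
proof (intro allI)
  fix i j
  show "((\<lambda>y. g y $ i $ j) has_field_derivative f' $ i $ j) (at x)"
    by (rule has_field_derivative_transform_within_open[OF mhdD[OF assms(1)] assms(2,3)])
       (use assms(4) in simp)
qed

definition Sy :: "cloop \<Rightarrow> cloop" where
  "Sy g \<mu> = csm (- \<i>) (csm \<mu> (Dm g \<mu>) ** minv (g \<mu>)) - csm (\<i> / 2) (g \<mu> ** sigma3 ** minv (g \<mu>))"

lemma mhol_Sy:
  assumes "open S" "mat_holomorphic_on g S" "\<forall>x\<in>S. det (g x) \<noteq> 0"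
  shows "mat_holomorphic_on (Sy g) S"
proof -
  have "mat_holomorphic_on (\<lambda>\<mu>. csm (- \<i>) (csm \<mu> (Dm g \<mu>) ** minv (g \<mu>)) - csm (\<i> / 2) (g \<mu> ** sigma3 ** minv (g \<mu>))) S"
    by (intro mhol_diff mhol_csm mhol_mult mhol_minv mhol_Dm mhol_const assms holomorphic_intros)
  then show ?thesis unfolding Sy_def[abs_def] .
qed

lemma symL3_hol:
  assumes "open S" "sphere 0 1 \<subseteq> S" "mat_holomorphic_on g S" "\<forall>x\<in>sphere 0 1. F x = g x" "norm \<mu> = 1"
  shows "symL3 F \<mu> = Sy g \<mu>"
proof -
  have "ldl F \<mu> = ldl g \<mu>" by (rule ldl_sphere[OF assms(5,4)])
  also have "\<dots> = csm \<mu> (Dm g \<mu>)"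
    by (rule ldl_mhd[OF mhol_mhd[OF assms(3,1)]]) (use assms in auto)
  finally show ?thesis using assms(4,5) unfolding symL3_def Sy_def by simp
qed

lemma symhat1_hol:
  assumes "open S" "sphere 0 1 \<subseteq> S" "mat_holomorphic_on g S" "\<forall>x\<in>S. det (g x) \<noteq> 0"
    "\<forall>x\<in>sphere 0 1. F x = g x"
  shows "symhat1 F = offd (Sy g 1) - csm (\<i> / 2) (diagp (Dm (Sy g) 1))"
proof -
  have 1: "1 \<in> S" using assms(2) by auto
  have hS: "mat_holomorphic_on (Sy g) S" by (rule mhol_Sy[OF assms(1,3,4)])
  have "ldl (\<lambda>\<mu>. diagp (symL3 F \<mu>)) 1 = ldl (\<lambda>\<mu>. diagp (Sy g \<mu>)) 1"
    by (rule ldl_sphere) (use symL3_hol[OF assms(1,2,3,5)] in auto)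
  also have "\<dots> = csm 1 (diagp (Dm (Sy g) 1))"
    by (rule ldl_mhd[OF mhd_diagp[OF mhol_mhd[OF hS assms(1) 1]]])
  finally show ?thesis unfolding symhat1_def
    using symL3_hol[OF assms(1,2,3,5), of 1] by (simp add: csm_def)
qed



context fixes A B C :: cmat begin

lemma mm_assoc: "(A ** B) ** C = A ** (B ** C)"
  by (simp add: cmat_eq_iff algebra_simps)
lemma mm_add_l: "A ** (B + C) = A ** B + A ** C"
  by (simp add: cmat_eq_iff algebra_simps)
lemma mm_add_r: "(A + B) ** C = A ** C + B ** C"
  by (simp add: cmat_eq_iff algebra_simps)
lemma mm_diff_l: "A ** (B - C) = A ** B - A ** C"
  by (simp add: cmat_eq_iff algebra_simps)
lemma mm_diff_r: "(A - B) ** C = A ** C - B ** C"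
  by (simp add: cmat_eq_iff algebra_simps)
lemma mm_uminus_l: "(- A) ** B = - (A ** B)"
  by (simp add: cmat_eq_iff algebra_simps)
lemma mm_uminus_r: "A ** (- B) = - (A ** B)"
  by (simp add: cmat_eq_iff algebra_simps)
lemma csm_mm_l: "csm c A ** B = csm c (A ** B)"
  by (simp add: cmat_eq_iff algebra_simps)
lemma csm_mm_r: "A ** csm c B = csm c (A ** B)"
  by (simp add: cmat_eq_iff algebra_simps)
lemma csm_add: "csm c (A + B) = csm c A + csm c B"
  by (simp add: cmat_eq_iff algebra_simps)
lemma csm_diff: "csm c (A - B) = csm c A - csm c B"
  by (simp add: cmat_eq_iff algebra_simps)
lemma csm_csm: "csm a (csm b A) = csm (a * b) A"
  by (simp add: cmat_eq_iff algebra_simps)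
lemma csm_one[simp]: "csm 1 A = A"
  by (simp add: cmat_eq_iff)
lemma csm_zero[simp]: "csm 0 A = 0"
  by (simp add: cmat_eq_iff)
lemma mm_lid[simp]: "mat 1 ** A = A" by (simp add: cmat_eq_iff)
lemma mm_rid[simp]: "A ** mat 1 = A" by (simp add: cmat_eq_iff)
lemma minv_l: "det A \<noteq> 0 \<Longrightarrow> minv A ** A = mat 1"
  by (simp add: cmat_eq_iff divide_simps) (simp add: det_cmat algebra_simps)
lemma minv_r: "det A \<noteq> 0 \<Longrightarrow> A ** minv A = mat 1"
  by (simp add: cmat_eq_iff divide_simps) (simp add: det_cmat algebra_simps)
end

lemma minv_l2: fixes A B :: cmat shows "det A \<noteq> 0 \<Longrightarrow> minv A ** (A ** B) = B"
  by (simp add: mm_assoc[symmetric] minv_l)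
lemma minv_r2: fixes A B :: cmat shows "det A \<noteq> 0 \<Longrightarrow> A ** (minv A ** B) = B"
  by (simp add: mm_assoc[symmetric] minv_r)
lemma minv_mat1[simp]: "minv (mat 1) = mat 1"
  by (simp add: cmat_eq_iff det_cmat)
lemma det_mm: fixes A B :: cmat shows "det (A ** B) = det A * det B"
  by (rule det_mul)
lemma minv_mm: fixes A B :: cmat shows "det A \<noteq> 0 \<Longrightarrow> det B \<noteq> 0 \<Longrightarrow> minv (A ** B) = minv B ** minv A"
proof -
  assume a: "det A \<noteq> 0" and b: "det B \<noteq> 0"
  have "minv (A ** B) = minv (A ** B) ** ((A ** B) ** (minv B ** minv A))"
    using a b by (simp add: mm_assoc minv_r2 minv_r)
  also have "\<dots> = minv B ** minv A"
    by (rule minv_l2) (simp add: det_mm a b)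
  finally show ?thesis .
qed

lemma Sy_MG:
  assumes "det (M::cmat) \<noteq> 0" "det G \<noteq> 0"
  shows "csm (- \<i>) (csm \<mu> (DM ** G + M ** DG) ** minv (M ** G)) - csm (\<i> / 2) (M ** G ** sigma3 ** minv (M ** G))
     = csm (- \<i>) (csm \<mu> DM ** minv M) + M ** (csm (- \<i>) (csm \<mu> DG ** minv G) - csm (\<i> / 2) (G ** sigma3 ** minv G)) ** minv M"
  using assms
  by (simp add: minv_mm mm_assoc mm_add_l mm_add_r mm_diff_l mm_diff_r csm_mm_l csm_mm_r csm_add csm_diff csm_csm minv_r2)

lemma final_alg:
  "(offd (csm (- \<i>) P + S) - csm (\<i> / 2) (diagp (csm (- \<i>) Q + P ** S + T - S ** P))
      = offd S - csm (\<i> / 2) (diagp T))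
   \<longleftrightarrow> offd (csm (- \<i>) P) = 0 \<and> diagp (csm (- 1 / 2) Q) = 0"
  by (simp add: cmat_eq_iff algebra_simps) (auto simp: algebra_simps)



lemma core:
  assumes S: "open S" "sphere 0 1 \<subseteq> S" and hM: "mat_holomorphic_on M S" and hG: "mat_holomorphic_on G S"
    and dM: "\<forall>x\<in>S. det (M x) \<noteq> 0" and dG: "\<forall>x\<in>S. det (G x) \<noteq> 0" and M1: "M 1 = mat 1"
    and Fa: "\<forall>x\<in>sphere 0 1. Fa x = G x" and Fb: "\<forall>x\<in>sphere 0 1. Fb x = M x ** G x"
    and R: "\<forall>x\<in>sphere 0 1. R x = M x"
  shows "symhat1 Fb = symhat1 Fa \<longleftrightarrow> offd (Xmon R 1) = 0 \<and> diagp (Ymon R 1) = 0"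
proof -
  have one: "1 \<in> S" using S(2) by auto
  define MG where "MG = (\<lambda>x. M x ** G x)"
  have hMG: "mat_holomorphic_on MG S" unfolding MG_def by (rule mhol_mult[OF hM hG])
  have dMG: "\<forall>x\<in>S. det (MG x) \<noteq> 0" using dM dG by (simp add: MG_def det_mm)
  define Pm where "Pm = (\<lambda>\<mu>. csm \<mu> (Dm M \<mu>) ** minv (M \<mu>))"
  have hPm: "mat_holomorphic_on Pm S" unfolding Pm_def
    by (intro mhol_mult mhol_csm mhol_Dm mhol_minv hM S dM holomorphic_intros)
  have hSG: "mat_holomorphic_on (Sy G) S" by (rule mhol_Sy[OF S(1) hG dG])
  have eqS: "\<forall>\<mu>\<in>S. Sy MG \<mu> = csm (- \<i>) (Pm \<mu>) + M \<mu> ** Sy G \<mu> ** minv (M \<mu>)"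
  proof
    fix \<mu> assume m: "\<mu> \<in> S"
    have "Dm MG \<mu> = Dm M \<mu> ** G \<mu> + M \<mu> ** Dm G \<mu>"
      unfolding MG_def by (rule Dm_eq[OF mhd_mult[OF mhol_mhd[OF hM S(1) m] mhol_mhd[OF hG S(1) m]]])
    then show "Sy MG \<mu> = csm (- \<i>) (Pm \<mu>) + M \<mu> ** Sy G \<mu> ** minv (M \<mu>)"
      unfolding Sy_def Pm_def using Sy_MG[of "M \<mu>" "G \<mu>" \<mu> "Dm M \<mu>" "Dm G \<mu>"] dM dG m
      by (simp add: MG_def)
  qed
  have d1: "mhd (\<lambda>\<mu>. csm (- \<i>) (Pm \<mu>) + M \<mu> ** Sy G \<mu> ** minv (M \<mu>))
     (csm 0 (Pm 1) + csm (- \<i>) (Dm Pm 1) +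
      ((Dm M 1 ** Sy G 1 + M 1 ** Dm (Sy G) 1) ** minv (M 1) + M 1 ** Sy G 1 ** (- (minv (M 1) ** Dm M 1 ** minv (M 1))))) 1"
    by (rule mhd_add[OF mhd_csm[OF DERIV_const mhol_mhd[OF hPm S(1) one]]
          mhd_mult[OF mhd_mult[OF mhol_mhd[OF hM S(1) one] mhol_mhd[OF hSG S(1) one]]
                      mhd_minv[OF mhol_mhd[OF hM S(1) one]]]]) (use dM one in auto)
  have "Dm (Sy MG) 1 = csm 0 (Pm 1) + csm (- \<i>) (Dm Pm 1) +
      ((Dm M 1 ** Sy G 1 + M 1 ** Dm (Sy G) 1) ** minv (M 1) + M 1 ** Sy G 1 ** (- (minv (M 1) ** Dm M 1 ** minv (M 1))))"
    by (rule Dm_eq[OF mhd_transform[OF d1 S(1) one]]) (use eqS in auto)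
  also have "\<dots> = csm (- \<i>) (Dm Pm 1) + Dm M 1 ** Sy G 1 + Dm (Sy G) 1 - Sy G 1 ** Dm M 1"
    unfolding M1 by (simp add: mm_uminus_r)
  finally have DSy: "Dm (Sy MG) 1 = csm (- \<i>) (Dm Pm 1) + Dm M 1 ** Sy G 1 + Dm (Sy G) 1 - Sy G 1 ** Dm M 1" .
  have Sy1: "Sy MG 1 = csm (- \<i>) (Dm M 1) + Sy G 1"
    using eqS one M1 by (simp add: Pm_def)
  have e1: "symhat1 Fb = offd (Sy MG 1) - csm (\<i> / 2) (diagp (Dm (Sy MG) 1))"
    by (rule symhat1_hol[OF S hMG dMG]) (use Fb in \<open>simp add: MG_def\<close>)
  have e2: "symhat1 Fa = offd (Sy G 1) - csm (\<i> / 2) (diagp (Dm (Sy G) 1))"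
    by (rule symhat1_hol[OF S hG dG Fa])
  have ldlM: "ldl R \<mu> = csm \<mu> (Dm M \<mu>)" if "norm \<mu> = 1" for \<mu>
  proof -
    have "ldl R \<mu> = ldl M \<mu>" by (rule ldl_sphere[OF that R])
    also have "\<dots> = csm \<mu> (Dm M \<mu>)"
      by (rule ldl_mhd[OF mhol_mhd[OF hM S(1)]]) (use S(2) that in auto)
    finally show ?thesis .
  qed
  have R1: "R 1 = mat 1" using R M1 by auto
  have X1: "Xmon R 1 = csm (- \<i>) (Dm M 1)"
    unfolding Xmon_def using ldlM[of 1] R1 by simp
  have "ldl (\<lambda>\<mu>. ldl R \<mu> ** minv (R \<mu>)) 1 = ldl Pm 1"
    by (rule ldl_sphere) (use ldlM R in \<open>auto simp: Pm_def\<close>)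
  also have "\<dots> = Dm Pm 1"
    using ldl_mhd[OF mhol_mhd[OF hPm S(1) one]] by simp
  finally have Y1: "Ymon R 1 = csm (- 1 / 2) (Dm Pm 1)"
    unfolding Ymon_def by simp
  show ?thesis
    unfolding e1 e2 DSy Sy1 X1 Y1 by (rule final_alg)
qed



lemma Re_pos_not_nonpos: "0 < Re z \<Longrightarrow> z \<notin> \<real>\<^sub>\<le>\<^sub>0"
  by (auto elim!: nonpos_Reals_cases)

lemma glue_circle:
  assumes U: "open U" and cf: "continuous_on U f" and hf: "f holomorphic_on (U - sphere 0 1)"
  shows "f holomorphic_on U"
proof -
  have "f field_differentiable (at p)" if pU: "p \<in> U" for p
  proof (cases "p \<in> sphere 0 1")
    case False
    have "open (U - sphere 0 1)" using U by (simp add: open_Diff)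
    then show ?thesis using hf False pU holomorphic_on_imp_differentiable_at by blast
  next
    case True
    then have np: "norm p = 1" by simp
    then have p0: "p \<noteq> 0" by auto
    define V where "V = (\<lambda>w. p * exp w) -` U"
    have oV: "open V" unfolding V_def
      by (rule open_vimage[OF U]) (auto intro!: continuous_intros)
    define g where "g = (\<lambda>w. f (p * exp w))"
    have cg: "continuous_on V g" unfolding g_def V_def
      by (rule continuous_on_compose2[OF cf]) (auto intro!: continuous_intros)
    have hg1: "g holomorphic_on (V \<inter> {w. 1 \<bullet> w < 0})"
      unfolding g_def
    proof (rule holomorphic_on_compose_gen[unfolded o_def, OF _ hf])
      show "(\<lambda>w. p * exp w) holomorphic_on V \<inter> {w. 1 \<bullet> w < 0}" by (intro holomorphic_intros)
      show "(\<lambda>w. p * exp w) ` (V \<inter> {w. 1 \<bullet> w < 0}) \<subseteq> U - sphere 0 1"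
        by (auto simp: V_def norm_mult np inner_complex_def)
    qed
    have hg2: "g holomorphic_on (V \<inter> {w. 0 < 1 \<bullet> w})"
      unfolding g_def
    proof (rule holomorphic_on_compose_gen[unfolded o_def, OF _ hf])
      show "(\<lambda>w. p * exp w) holomorphic_on V \<inter> {w. 0 < 1 \<bullet> w}" by (intro holomorphic_intros)
      show "(\<lambda>w. p * exp w) ` (V \<inter> {w. 0 < 1 \<bullet> w}) \<subseteq> U - sphere 0 1"
        by (auto simp: V_def norm_mult np inner_complex_def)
    qed
    have hg: "g holomorphic_on V"
      by (rule holomorphic_on_paste_across_line[OF oV _ hg1 hg2 cg]) simp
    define W where "W = U \<inter> ball p 1"
    have oW: "open W" using U by (simp add: W_def open_Int)
    have pW: "p \<in> W" using pU by (simp add: W_def)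
    have rew: "0 < Re (z / p)" if "z \<in> W" for z
    proof -
      have "z / p - 1 = (z - p) / p" using p0 by (simp add: field_simps)
      then have "norm (z / p - 1) = norm (z - p)"
        using np by (simp add: norm_divide)
      also have "\<dots> < 1" using that by (simp add: W_def dist_norm norm_minus_commute)
      finally have "norm (z / p - 1) < 1" .
      then have "\<bar>Re (z / p - 1)\<bar> < 1" using abs_Re_le_cmod le_less_trans by blast
      then show ?thesis by simp
    qed
    have hL: "(\<lambda>z. Ln (z / p)) holomorphic_on W"
      by (intro holomorphic_intros Re_pos_not_nonpos rew) (use p0 in auto)
    have eq: "p * exp (Ln (z / p)) = z" if "z \<in> W" for z
    proof -
      have "z / p \<noteq> 0" using rew[OF that] by auto
      then show ?thesis using p0 by simp
    qed
    have "(g \<circ> (\<lambda>z. Ln (z / p))) holomorphic_on W"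
      by (rule holomorphic_on_compose_gen[OF hL hg]) (auto simp: V_def eq W_def)
    moreover have "\<forall>z\<in>W. (g \<circ> (\<lambda>z. Ln (z / p))) z = f z"
      by (simp add: g_def eq)
    ultimately have "f holomorphic_on W"
      using holomorphic_cong by (metis (no_types, lifting))
    then show ?thesis using holomorphic_on_imp_differentiable_at[OF _ oW pW] by blast
  qed
  then show ?thesis using U by (simp add: holomorphic_on_def field_differentiable_at_within)
qed



lemma inv_cnj_sphere: "norm (z::complex) = 1 \<Longrightarrow> 1 / cnj z = z"
proof -
  assume n: "norm z = 1"
  have "z * cnj z = 1" using complex_norm_square[of z] n by simp
  moreover have "cnj z \<noteq> 0" using n by auto
  ultimately show ?thesis by (simp add: field_simps)
qed

lemma refl_hol:
  assumes "g holomorphic_on A" "open A"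
  shows "(\<lambda>z. cnj (g (1 / cnj z))) holomorphic_on {z. z \<noteq> 0 \<and> 1 / cnj z \<in> A}"
proof -
  have o: "open (cnj -` A)" by (rule open_vimage[OF assms(2)]) (auto intro: continuous_intros)
  have "surj cnj" by (metis complex_cnj_cnj surjI)
  then have im: "cnj ` (cnj -` A) = A" by (simp add: image_vimage_eq)
  have h1: "(cnj \<circ> g \<circ> cnj) holomorphic_on (cnj -` A)"
    by (rule holomorphic_on_compose_cnj_cnj) (use assms im o in auto)
  have h2: "(\<lambda>z::complex. 1 / z) holomorphic_on {z. z \<noteq> 0 \<and> 1 / cnj z \<in> A}"
    by (intro holomorphic_intros) auto
  have "((cnj \<circ> g \<circ> cnj) \<circ> (\<lambda>z. 1 / z)) holomorphic_on {z. z \<noteq> 0 \<and> 1 / cnj z \<in> A}"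
    by (rule holomorphic_on_compose_gen[OF h2 h1]) auto
  then show ?thesis by (simp add: o_def)
qed

lemma const_on_cball:
  assumes "h holomorphic_on ball 0 1" "continuous_on (cball 0 1) h" "\<forall>z\<in>sphere 0 1. h z = c"
  shows "\<forall>z\<in>cball 0 1. h z = (c::complex)"
proof
  fix z :: complex assume z: "z \<in> cball 0 1"
  show "h z = c"
  proof (cases "z \<in> sphere 0 1")
    case True then show ?thesis using assms(3) by auto
  next
    case False
    then have zb: "z \<in> ball 0 1" using z by auto
    have "cmod (h z - c) \<le> 0"
      by (rule maximum_modulus_frontier[where S="ball 0 1" and f="\<lambda>z. h z - c"])
         (use assms zb in \<open>auto intro!: holomorphic_intros continuous_intros\<close>)
    then show ?thesis by simp
  qed
qed

lemma liouville_glue: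
  assumes hf: "f holomorphic_on ball 0 1" and cf: "continuous_on (cball 0 1) f"
    and hg: "g holomorphic_on ball 0 1" and cg: "continuous_on (cball 0 1) g"
    and eq: "\<forall>z\<in>sphere 0 1. f z = cnj (g z)"
  shows "\<forall>z\<in>cball 0 1. f z = f 0"
proof -
  define E where "E = (\<lambda>z. if norm z \<le> 1 then f z else cnj (g (1 / cnj z)))"
  have cout: "continuous_on {z. 1 \<le> norm z} (\<lambda>z. cnj (g (1 / cnj z)))"
  proof -
    have "continuous_on {z. 1 \<le> norm z} (\<lambda>z::complex. 1 / cnj z)"
      by (intro continuous_intros) auto
    moreover have "(\<lambda>z::complex. 1 / cnj z) ` {z. 1 \<le> norm z} \<subseteq> cball 0 1"
      by (auto simp: norm_divide divide_le_eq_1)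
    ultimately have "continuous_on {z. 1 \<le> norm z} (g \<circ> (\<lambda>z. 1 / cnj z))"
      using continuous_on_compose continuous_on_subset[OF cg] by blast
    then show ?thesis by (auto simp: o_def intro!: continuous_intros)
  qed
  have "continuous_on (cball 0 1 \<union> {z. 1 \<le> norm z}) E"
    unfolding E_def
  proof (rule continuous_on_cases[OF _ _ cf cout])
    show "closed (cball (0::complex) 1)" by simp
    show "closed {z::complex. 1 \<le> norm z}" by (simp add: closed_Collect_le continuous_on_norm_id)
    show "\<forall>x. x \<in> cball 0 1 \<and> \<not> cmod x \<le> 1 \<or> x \<in> {z. 1 \<le> cmod z} \<and> cmod x \<le> 1 \<longrightarrow>
        f x = cnj (g (1 / cnj x))"
      using eq by (auto simp: inv_cnj_sphere)
  qed
  moreover have "cball 0 1 \<union> {z. 1 \<le> norm z} = (UNIV::complex set)" by auto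
  ultimately have cE: "continuous_on UNIV E" by simp
  have h1: "E holomorphic_on ball 0 1"
    by (rule holomorphic_transform[OF hf]) (auto simp: E_def)
  have h2: "E holomorphic_on {z. 1 < norm z}"
  proof (rule holomorphic_transform)
    show "(\<lambda>z. cnj (g (1 / cnj z))) holomorphic_on {z. 1 < norm z}"
      by (rule holomorphic_on_subset[OF refl_hol[OF hg]]) (auto simp: norm_divide divide_less_eq_1)
  qed (auto simp: E_def)
  have "E holomorphic_on (ball 0 1 \<union> {z. 1 < norm z})"
    by (rule holomorphic_on_Un[OF h1 h2]) (auto simp: open_Collect_less continuous_on_norm_id)
  moreover have "ball 0 1 \<union> {z. 1 < norm z} = UNIV - sphere (0::complex) 1" by auto
  ultimately have "E holomorphic_on UNIV"
    using glue_circle[OF _ cE] by simp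
  moreover have "bounded (range E)"
  proof -
    have "range E \<subseteq> f ` cball 0 1 \<union> cnj ` g ` cball 0 1"
    proof
      fix y assume "y \<in> range E"
      then obtain z where z: "y = E z" by auto
      show "y \<in> f ` cball 0 1 \<union> cnj ` g ` cball 0 1"
      proof (cases "norm z \<le> 1")
        case True then show ?thesis using z by (auto simp: E_def)
      next
        case False
        then have "1 / cnj z \<in> cball 0 1" by (auto simp: norm_divide divide_le_eq_1)
        then show ?thesis using z False by (auto simp: E_def)
      qed
    qed
    moreover have "compact (f ` cball 0 1)" by (rule compact_continuous_image[OF cf]) simp
    moreover have "compact (cnj ` g ` cball 0 1)"
      by (intro compact_continuous_image cg continuous_intros) simp
    ultimately show ?thesis
      by (meson bounded_Un bounded_subset compact_imp_bounded)
  qed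
  ultimately have "E constant_on UNIV" by (rule Liouville_theorem)
  then have "\<forall>z. E z = E 0" by (metis UNIV_I constant_on_def)
  show ?thesis
  proof
    fix z :: complex assume "z \<in> cball 0 1"
    then have "norm z \<le> 1" by simp
    moreover have "E z = E 0" using \<open>\<forall>z. E z = E 0\<close> by blast
    ultimately show "f z = f 0" by (simp add: E_def)
  qed
qed



lemma cont_entry: "continuous_on S G \<Longrightarrow> continuous_on S (\<lambda>z. (G z :: cmat) $ i $ j)"
  by (intro continuous_intros)

lemma plus_props:
  assumes "V \<in> LoopPlusPos"
  obtains G where "plus_ext V G" "\<forall>i. G 0 $ i $ i \<in> \<real> \<and> 0 < Re (G 0 $ i $ i)"
    "\<forall>z\<in>cball 0 1. det (G z) = 1" "G 0 $ 1 $ 2 = 0" "G 0 $ 2 $ 1 = 0"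
proof -
  from assms obtain G where pe: "plus_ext V G" and pos: "\<forall>i. G 0 $ i $ i \<in> \<real> \<and> 0 < Re (G 0 $ i $ i)"
    and sl: "V \<in> LoopSL"
    unfolding LoopPlusPos_def LoopPlus_def by blast
  have hG: "mat_holomorphic_on G (ball 0 1)" and cG: "continuous_on (cball 0 1) G"
    and eqG: "\<forall>l\<in>sphere 0 1. G l = V l" using pe by (auto simp: plus_ext_def)
  have detV: "\<forall>l\<in>sphere 0 1. det (V l) = 1" and tw: "\<forall>l\<in>sphere 0 1. V (-l) = sigma3 ** V l ** sigma3"
    using sl by (auto simp: LoopSL_def twisted_def)
  have "\<forall>z\<in>cball 0 1. det (G z) = 1"
  proof (rule const_on_cball)
    show "(\<lambda>z. det (G z)) holomorphic_on ball 0 1" by (rule mhol_det[OF hG])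
    show "continuous_on (cball 0 1) (\<lambda>z. det (G z))"
      unfolding det_cmat by (intro continuous_intros cG)
    show "\<forall>z\<in>sphere 0 1. det (G z) = 1" using eqG detV by simp
  qed
  moreover have "G 0 $ i $ j = 0" if "i \<noteq> j" for i j :: 2
  proof -
    have m: "(- z) \<in> ball 0 1" if "z \<in> ball 0 1" for z :: complex using that by simp
    have mc: "(- z) \<in> cball 0 1" if "z \<in> cball 0 1" for z :: complex using that by simp
    have "\<forall>z\<in>cball 0 1. G z $ i $ j + G (- z) $ i $ j = 0"
    proof (rule const_on_cball)
      have "(\<lambda>z. G z $ i $ j) holomorphic_on ball 0 1" using hG by (simp add: mat_holomorphic_on_def)
      moreover have "(\<lambda>z. G (- z) $ i $ j) holomorphic_on ball 0 1"
        using holomorphic_on_compose_gen[OF holomorphic_on_minus[OF holomorphic_on_id] \<open>(\<lambda>z. G z $ i $ j) holomorphic_on ball 0 1\<close>]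
        by (simp add: o_def image_subset_iff)
      ultimately show "(\<lambda>z. G z $ i $ j + G (- z) $ i $ j) holomorphic_on ball 0 1"
        by (intro holomorphic_intros)
      have "continuous_on (cball 0 1) (\<lambda>z. G (- z) $ i $ j)"
        by (rule continuous_on_compose2[OF cont_entry[OF cG]]) (auto intro!: continuous_intros)
      then show "continuous_on (cball 0 1) (\<lambda>z. G z $ i $ j + G (- z) $ i $ j)"
        by (rule continuous_on_add[OF cont_entry[OF cG]])
      show "\<forall>z\<in>sphere 0 1. G z $ i $ j + G (- z) $ i $ j = 0"
      proof
        fix z :: complex assume z: "z \<in> sphere 0 1"
        then have "- z \<in> sphere 0 1" by simp
        then have "G (- z) = sigma3 ** V z ** sigma3" using eqG tw z by simp
        then show "G z $ i $ j + G (- z) $ i $ j = 0" using eqG z that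
          by (cases i rule: exhaust_2[THEN disjE]; cases j rule: exhaust_2[THEN disjE]) auto
      qed
    qed
    then have "G 0 $ i $ j + G (- 0) $ i $ j = 0" by (metis centre_in_cball zero_le_one)
    then show ?thesis by simp
  qed
  ultimately show ?thesis using that pe pos by auto
qed



definition adj2 :: "cmat \<Rightarrow> cmat" where
  "adj2 M = mk2 (M$2$2) (- M$1$2) (- M$2$1) (M$1$1)"

lemma minv_adj2: "det M = 1 \<Longrightarrow> minv M = adj2 M"
  by (simp add: cmat_eq_iff adj2_def)

lemma adj2_nth[simp]: "adj2 M $1$1 = M$2$2" "adj2 M $1$2 = - M$1$2" "adj2 M $2$1 = - M$2$1" "adj2 M $2$2 = M$1$1"
  by (simp_all add: adj2_def)

lemma pos_real_mult: "x \<in> \<real> \<Longrightarrow> 0 < Re x \<Longrightarrow> y \<in> \<real> \<Longrightarrow> 0 < Re y \<Longrightarrow> x * y \<in> \<real> \<and> 0 < Re (x * y)"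
  by (auto elim!: Reals_cases)

lemma pos_real_one:
  assumes "a \<in> \<real>" "0 < Re a" "b \<in> \<real>" "0 < Re b" "a = cnj b" "a * b = 1"
  shows "a = 1 \<and> b = 1"
proof -
  obtain r where r: "a = of_real r" using assms(1) by (auto elim: Reals_cases)
  obtain s where s: "b = of_real s" using assms(3) by (auto elim: Reals_cases)
  have "r = s" using assms(5) r s by simp
  moreover have "r * s = 1" using assms(6) r s by (metis of_real_1 of_real_eq_iff of_real_mult)
  moreover have "r > 0" using assms(2) r by simp
  ultimately have "(r - 1) * (r + 1) = 0" "r + 1 \<noteq> 0" by (auto simp: algebra_simps)
  then have "r = 1" by simp
  then show ?thesis using r s \<open>r = s\<close> by simp
qed

lemma hol_entry: "mat_holomorphic_on G S \<Longrightarrow> (\<lambda>z. G z $ i $ j) holomorphic_on S"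
  by (simp add: mat_holomorphic_on_def)

lemma plus_unique:
  assumes V1: "V1 \<in> LoopPlusPos" and V2: "V2 \<in> LoopPlusPos"
    and su: "\<forall>l\<in>sphere 0 1. (V2 l ** minv (V1 l))$1$1 = cnj ((V2 l ** minv (V1 l))$2$2)
                           \<and> (V2 l ** minv (V1 l))$2$1 = cnj ((V2 l ** minv (V1 l))$1$2)"
  shows "\<forall>l\<in>sphere 0 1. V1 l = V2 l"
proof -
  obtain G1 where pe1: "plus_ext V1 G1" and pos1: "\<forall>i. G1 0 $ i $ i \<in> \<real> \<and> 0 < Re (G1 0 $ i $ i)"
    and d1: "\<forall>z\<in>cball 0 1. det (G1 z) = 1" and o1: "G1 0 $ 1 $ 2 = 0" "G1 0 $ 2 $ 1 = 0"
    by (rule plus_props[OF V1])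
  obtain G2 where pe2: "plus_ext V2 G2" and pos2: "\<forall>i. G2 0 $ i $ i \<in> \<real> \<and> 0 < Re (G2 0 $ i $ i)"
    and d2: "\<forall>z\<in>cball 0 1. det (G2 z) = 1" and o2: "G2 0 $ 1 $ 2 = 0" "G2 0 $ 2 $ 1 = 0"
    by (rule plus_props[OF V2])
  have h1: "mat_holomorphic_on G1 (ball 0 1)" and c1: "continuous_on (cball 0 1) G1"
    and e1: "\<forall>l\<in>sphere 0 1. G1 l = V1 l" using pe1 by (auto simp: plus_ext_def)
  have h2: "mat_holomorphic_on G2 (ball 0 1)" and c2: "continuous_on (cball 0 1) G2"
    and e2: "\<forall>l\<in>sphere 0 1. G2 l = V2 l" using pe2 by (auto simp: plus_ext_def)
  define WH where "WH = (\<lambda>z. G2 z ** adj2 (G1 z))"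
  have hw: "(\<lambda>z. WH z $ i $ j) holomorphic_on ball 0 1" for i j
    unfolding WH_def mmult_nth
    by (cases i rule: exhaust_2[THEN disjE]; cases j rule: exhaust_2[THEN disjE])
       (simp_all add: holomorphic_intros hol_entry[OF h1] hol_entry[OF h2])
  have cw: "continuous_on (cball 0 1) (\<lambda>z. WH z $ i $ j)" for i j
    unfolding WH_def mmult_nth
    by (cases i rule: exhaust_2[THEN disjE]; cases j rule: exhaust_2[THEN disjE])
       (simp_all add: continuous_intros cont_entry[OF c1] cont_entry[OF c2])
  have Weq: "\<forall>l\<in>sphere 0 1. WH l = V2 l ** minv (V1 l)"
  proof
    fix l :: complex assume l: "l \<in> sphere 0 1"
    then have "l \<in> cball 0 1" by simp
    then have "det (G1 l) = 1" using d1 by blast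
    then have "det (V1 l) = 1" using e1 l by simp
    then show "WH l = V2 l ** minv (V1 l)" using e1 e2 l by (simp add: WH_def minv_adj2)
  qed
  have su': "\<forall>l\<in>sphere 0 1. WH l $1$1 = cnj (WH l $2$2) \<and> WH l $2$1 = cnj (WH l $1$2)"
    using su Weq by simp
  have k11: "\<forall>z\<in>cball 0 1. WH z $1$1 = WH 0 $1$1"
    by (rule liouville_glue[OF hw[of 1 1] cw[of 1 1] hw[of 2 2] cw[of 2 2]]) (use su' in auto)
  have k22: "\<forall>z\<in>cball 0 1. WH z $2$2 = WH 0 $2$2"
    by (rule liouville_glue[OF hw[of 2 2] cw[of 2 2] hw[of 1 1] cw[of 1 1]]) (use su' in \<open>auto simp: complex_cnj_cnj\<close>)
  have k21: "\<forall>z\<in>cball 0 1. WH z $2$1 = WH 0 $2$1"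
    by (rule liouville_glue[OF hw[of 2 1] cw[of 2 1] hw[of 1 2] cw[of 1 2]]) (use su' in auto)
  have k12: "\<forall>z\<in>cball 0 1. WH z $1$2 = WH 0 $1$2"
    by (rule liouville_glue[OF hw[of 1 2] cw[of 1 2] hw[of 2 1] cw[of 2 1]]) (use su' in \<open>auto simp: complex_cnj_cnj\<close>)
  have W0: "WH 0 $1$2 = 0" "WH 0 $2$1 = 0" "WH 0 $1$1 = G2 0 $1$1 * G1 0 $2$2" "WH 0 $2$2 = G2 0 $2$2 * G1 0 $1$1"
    using o1 o2 by (simp_all add: WH_def)
  have dd: "G1 0 $1$1 * G1 0 $2$2 = 1" "G2 0 $1$1 * G2 0 $2$2 = 1"
  proof -
    have z: "(0::complex) \<in> cball 0 1" by simp
    have "det (G1 0) = 1" "det (G2 0) = 1" using d1 d2 z by blast+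
    then show "G1 0 $1$1 * G1 0 $2$2 = 1" "G2 0 $1$1 * G2 0 $2$2 = 1"
      using o1 o2 by (simp_all add: det_cmat)
  qed
  have p1: "WH 0 $1$1 \<in> \<real> \<and> 0 < Re (WH 0 $1$1)"
    unfolding W0 by (intro pos_real_mult) (use pos1 pos2 in auto)
  have p2: "WH 0 $2$2 \<in> \<real> \<and> 0 < Re (WH 0 $2$2)"
    unfolding W0 by (intro pos_real_mult) (use pos1 pos2 in auto)
  have one: "(1::complex) \<in> sphere 0 1" by simp
  have "WH 0 $1$1 * WH 0 $2$2 = 1"
  proof -
    have "G2 0$1$1 * G1 0$2$2 * (G2 0$2$2 * G1 0$1$1) = (G1 0$1$1 * G1 0$2$2) * (G2 0$1$1 * G2 0$2$2)"
      by (simp only: mult_ac)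
    then show ?thesis unfolding W0 using dd by simp
  qed
  moreover have "WH 0 $1$1 = cnj (WH 0 $2$2)"
  proof -
    have c1: "(1::complex) \<in> cball 0 1" by simp
    have "WH 1 $1$1 = cnj (WH 1 $2$2)" using su' one by blast
    moreover have "WH 1 $1$1 = WH 0 $1$1" "WH 1 $2$2 = WH 0 $2$2" using k11 k22 c1 by blast+
    ultimately show ?thesis by simp
  qed
  ultimately have ab: "WH 0 $1$1 = 1 \<and> WH 0 $2$2 = 1"
    using pos_real_one p1 p2 by blast
  show ?thesis
  proof
    fix l :: complex assume l: "l \<in> sphere 0 1"
    then have lc: "l \<in> cball 0 1" by simp
    have "WH l = mat 1"
      using k11 k12 k21 k22 lc W0 ab by (simp add: cmat_eq_iff)
    then have w: "V2 l ** minv (V1 l) = mat 1" using Weq l by simp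
    have "det (G1 l) = 1" using d1 lc by blast
    then have dv: "det (V1 l) \<noteq> 0" using e1 l by simp
    have "V2 l = (V2 l ** minv (V1 l)) ** V1 l"
      using dv by (simp add: mm_assoc minv_l)
    then show "V1 l = V2 l" using w by simp
  qed
qed



definition su2 :: "cmat \<Rightarrow> bool" where
  "su2 A \<longleftrightarrow> A$1$1 = cnj (A$2$2) \<and> A$2$1 = cnj (A$1$2)"

lemma det_ctr: "det (ctr A) = cnj (det A)"
  by (simp add: det_cmat)

lemma cnj_eq_iff: "cnj x = y \<longleftrightarrow> x = cnj y"
  by auto

lemma su2_iff: "det A = 1 \<Longrightarrow> (sigma3 ** minv (ctr A) ** sigma3 = A \<longleftrightarrow> su2 A)"
proof -
  assume d: "det A = 1"
  then have "det (ctr A) = 1" by (simp add: det_ctr)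
  then show ?thesis
    by (simp add: cmat_eq_iff su2_def cnj_eq_iff) auto
qed

lemma su2_mult: "su2 A \<Longrightarrow> su2 B \<Longrightarrow> su2 (A ** B)"
  by (simp add: su2_def)

lemma su2_minv: "su2 A \<Longrightarrow> det A = 1 \<Longrightarrow> su2 (minv A)"
  by (simp add: su2_def)

lemma su2_ctr_sigma: "su2 A \<Longrightarrow> det A = 1 \<Longrightarrow> ctr A ** sigma3 ** A = sigma3"
  by (auto simp: su2_def cmat_eq_iff det_cmat algebra_simps)

lemma inv_cnj_sphere': "l \<in> sphere 0 1 \<Longrightarrow> 1 / cnj l = l"
  by (simp add: inv_cnj_sphere)

lemma LoopSU_D:
  assumes "F \<in> LoopSU" "l \<in> sphere 0 1"
  shows "su2 (F l)" "det (F l) = 1"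
proof -
  show d: "det (F l) = 1" using assms by (simp add: LoopSU_def LoopSL_def)
  have "sigma3 ** minv (ctr (F l)) ** sigma3 = F l"
    using assms by (simp add: LoopSU_def inv_cnj_sphere')
  then show "su2 (F l)" using su2_iff[OF d] by simp
qed

lemma cont_mm:
  fixes f g :: "complex \<Rightarrow> cmat"
  shows "continuous_on S f \<Longrightarrow> continuous_on S g \<Longrightarrow> continuous_on S (\<lambda>x. f x ** g x)"
  unfolding matrix_matrix_mult_def by (intro continuous_intros)

lemma sigma3_sq: "sigma3 ** sigma3 = mat 1"
  by (simp add: cmat_eq_iff)

lemma LoopSL_mult:
  assumes "M \<in> LoopSL" "F \<in> LoopSL"
  shows "(\<lambda>l. M l ** F l) \<in> LoopSL"
proof -
  have "continuous_on (sphere 0 1) (\<lambda>l. M l ** F l)"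
    using assms by (intro cont_mm) (auto simp: LoopSL_def)
  moreover have "\<forall>l\<in>sphere 0 1. det (M l ** F l) = 1"
    using assms by (auto simp: LoopSL_def det_mm)
  moreover have "twisted (\<lambda>l. M l ** F l)"
  proof -
    have "sigma3 ** M l ** sigma3 ** (sigma3 ** F l ** sigma3) = sigma3 ** (M l ** F l) ** sigma3" for l
      by (simp add: mm_assoc sigma3_sq[symmetric]) (simp add: mm_assoc[symmetric] sigma3_sq)
    then show ?thesis using assms by (auto simp: LoopSL_def twisted_def)
  qed
  ultimately show ?thesis by (simp add: LoopSL_def)
qed

lemma LoopSU_mult:
  assumes "M \<in> LoopSU" "F \<in> LoopSU"
  shows "(\<lambda>l. M l ** F l) \<in> LoopSU"
proof -
  have sl: "(\<lambda>l. M l ** F l) \<in> LoopSL" using assms by (intro LoopSL_mult) (auto simp: LoopSU_def)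
  have "sigma3 ** minv (ctr (M l ** F l)) ** sigma3 = M l ** F l" if l: "l \<in> sphere 0 1" for l
  proof -
    have d: "det (M l ** F l) = 1" using LoopSU_D[OF assms(1) l] LoopSU_D[OF assms(2) l] by (simp add: det_mm)
    show ?thesis using su2_iff[OF d] su2_mult LoopSU_D[OF assms(1) l] LoopSU_D[OF assms(2) l] by simp
  qed
  then show ?thesis using sl by (simp add: LoopSU_def inv_cnj_sphere')
qed

lemma iwasawa_e_unique:
  assumes F1: "F1 \<in> LoopSU" and F2: "F2 \<in> LoopSU" and V1: "V1 \<in> LoopPlusPos" and V2: "V2 \<in> LoopPlusPos"
    and eq: "\<forall>l\<in>sphere 0 1. F1 l ** V1 l = F2 l ** V2 l"
  shows "\<forall>l\<in>sphere 0 1. F1 l = F2 l"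
proof -
  have dV: "det (V l) = 1" if "V \<in> LoopPlusPos" "l \<in> sphere 0 1" for V l
    using that by (simp add: LoopPlusPos_def LoopPlus_def LoopSL_def)
  have key: "V2 l ** minv (V1 l) = minv (F2 l) ** F1 l" if l: "l \<in> sphere 0 1" for l
  proof -
    have "minv (F2 l) ** F1 l = minv (F2 l) ** (F1 l ** V1 l) ** minv (V1 l)"
      using dV[OF V1 l] by (simp add: mm_assoc minv_r)
    also have "\<dots> = V2 l ** minv (V1 l)"
      using eq l LoopSU_D[OF F2 l] by (simp add: mm_assoc[symmetric] minv_l)
    finally show ?thesis by simp
  qed
  have "\<forall>l\<in>sphere 0 1. V1 l = V2 l"
  proof (rule plus_unique[OF V1 V2], intro ballI)
    fix l :: complex assume l: "l \<in> sphere 0 1"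
    have "su2 (minv (F2 l) ** F1 l)"
      using su2_mult su2_minv LoopSU_D[OF F1 l] LoopSU_D[OF F2 l] by simp
    then show "(V2 l ** minv (V1 l)) $ 1 $ 1 = cnj ((V2 l ** minv (V1 l)) $ 2 $ 2) \<and>
         (V2 l ** minv (V1 l)) $ 2 $ 1 = cnj ((V2 l ** minv (V1 l)) $ 1 $ 2)"
      unfolding key[OF l] su2_def by blast
  qed
  show ?thesis
  proof
    fix l :: complex assume l: "l \<in> sphere 0 1"
    have "F1 l = F1 l ** V1 l ** minv (V1 l)" using dV[OF V1 l] by (simp add: mm_assoc minv_r)
    also have "\<dots> = F2 l" using eq l \<open>\<forall>l\<in>sphere 0 1. V1 l = V2 l\<close> dV[OF V1 l] by (simp add: mm_assoc minv_r)
    finally show "F1 l = F2 l" .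
  qed
qed

lemma det_omega0: "l \<noteq> 0 \<Longrightarrow> det (omega0 l) = 1"
  by (simp add: det_cmat)

lemma su2_omega_conj:
  assumes "su2 h" "l \<in> sphere 0 1"
  shows "su2 (minv (omega0 l) ** h ** omega0 l)"
proof -
  have l0: "l \<noteq> 0" using assms(2) by auto
  have c: "l * cnj l = 1" using complex_norm_square[of l] assms(2) by simp
  have c2: "l * (l * (cnj l * cnj l)) = 1"
  proof -
    have "l * (l * (cnj l * cnj l)) = (l * cnj l) * (l * cnj l)" by (simp only: mult_ac)
    then show ?thesis using c by simp
  qed
  show ?thesis using assms(1) l0 c c2
    by (simp add: su2_def det_cmat field_simps)
qed



lemma dV_plus: "V \<in> LoopPlusPos \<Longrightarrow> l \<in> sphere 0 1 \<Longrightarrow> det (V l) = 1"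
  by (simp add: LoopPlusPos_def LoopPlus_def LoopSL_def)

lemma iwasawa_w_unique:
  assumes F1: "F1 \<in> LoopSU" and F2: "F2 \<in> LoopSU" and V1: "V1 \<in> LoopPlusPos" and V2: "V2 \<in> LoopPlusPos"
    and eq: "\<forall>l\<in>sphere 0 1. F1 l ** omega0 l ** V1 l = F2 l ** omega0 l ** V2 l"
  shows "\<forall>l\<in>sphere 0 1. F1 l = F2 l"
proof -
  have key: "V2 l ** minv (V1 l) = minv (omega0 l) ** (minv (F2 l) ** F1 l) ** omega0 l" if l: "l \<in> sphere 0 1" for l
  proof -
    have l0: "l \<noteq> 0" using l by auto
    note ds = dV_plus[OF V1 l] LoopSU_D(2)[OF F2 l] det_omega0[OF l0]
    have "V2 l ** minv (V1 l) = minv (omega0 l) ** (minv (F2 l) ** (F2 l ** omega0 l ** V2 l)) ** minv (V1 l)"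
      using ds by (simp add: mm_assoc minv_l2)
    also have "\<dots> = minv (omega0 l) ** (minv (F2 l) ** (F1 l ** omega0 l ** V1 l)) ** minv (V1 l)"
      using eq l by simp
    also have "\<dots> = minv (omega0 l) ** (minv (F2 l) ** F1 l) ** omega0 l"
      using ds by (simp add: mm_assoc minv_r2 minv_r)
    finally show ?thesis .
  qed
  have VV: "\<forall>l\<in>sphere 0 1. V1 l = V2 l"
  proof (rule plus_unique[OF V1 V2], intro ballI)
    fix l :: complex assume l: "l \<in> sphere 0 1"
    have "su2 (minv (F2 l) ** F1 l)"
      using su2_mult su2_minv LoopSU_D[OF F1 l] LoopSU_D[OF F2 l] by simp
    then have "su2 (V2 l ** minv (V1 l))" unfolding key[OF l] by (rule su2_omega_conj[OF _ l])
    then show "(V2 l ** minv (V1 l)) $ 1 $ 1 = cnj ((V2 l ** minv (V1 l)) $ 2 $ 2) \<and>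
         (V2 l ** minv (V1 l)) $ 2 $ 1 = cnj ((V2 l ** minv (V1 l)) $ 1 $ 2)"
      unfolding su2_def by blast
  qed
  show ?thesis
  proof
    fix l :: complex assume l: "l \<in> sphere 0 1"
    have l0: "l \<noteq> 0" using l by auto
    note ds = dV_plus[OF V1 l] det_omega0[OF l0]
    have "F1 l = F1 l ** omega0 l ** V1 l ** minv (V1 l) ** minv (omega0 l)" using ds by (simp add: mm_assoc minv_r minv_r2)
    also have "\<dots> = F2 l ** omega0 l ** V1 l ** minv (V1 l) ** minv (omega0 l)" using eq l VV by simp
    also have "\<dots> = F2 l" using ds by (simp add: mm_assoc minv_r minv_r2)
    finally show "F1 l = F2 l" .
  qed
qed

lemma omega_reality: "l \<in> sphere 0 1 \<Longrightarrow> ctr (omega0 l) ** sigma3 ** omega0 l = csm (-1) sigma3"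
proof -
  assume l: "l \<in> sphere 0 1"
  have c: "l * cnj l = 1" using complex_norm_square[of l] l by simp
  then have c': "cnj l * l = 1" by (simp add: mult.commute)
  have l0: "l \<noteq> 0" using l by auto
  have "cnj (inverse l) = l" using c l0 by (metis complex_cnj_inverse inverse_unique mult.commute c')
  then show ?thesis using c' l0 by (simp add: cmat_eq_iff)
qed



lemma mhol_cont:
  assumes "mat_holomorphic_on f S"
  shows "continuous_on S f"
proof -
  have "f = (\<lambda>z. \<chi> i j. f z $ i $ j)" by (simp add: vec_eq_iff)
  moreover have "continuous_on S (\<lambda>z. \<chi> i j. f z $ i $ j)"
    using assms unfolding mat_holomorphic_on_def
    by (intro continuous_on_vec_lambda holomorphic_on_imp_continuous_on) auto
  ultimately show ?thesis by simp
qed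

lemma cont_ctr: "continuous_on S f \<Longrightarrow> continuous_on S (\<lambda>x. ctr (f x))"
  unfolding ctr_def by (intro continuous_intros)
lemma cont_entries:
  assumes "\<forall>i j. continuous_on S (\<lambda>x. (f x :: cmat) $ i $ j)"
  shows "continuous_on S f"
proof -
  have "f = (\<lambda>z. \<chi> i j. f z $ i $ j)" by (simp add: vec_eq_iff)
  moreover have "continuous_on S (\<lambda>z. \<chi> i j. f z $ i $ j)"
    using assms by (intro continuous_on_vec_lambda) auto
  ultimately show ?thesis by simp
qed

lemma cont_adj2: "continuous_on S f \<Longrightarrow> continuous_on S (\<lambda>x. adj2 (f x))"
  by (rule cont_entries) (simp add: forall_2 continuous_intros)
lemma cont_csm: "continuous_on S f \<Longrightarrow> continuous_on S (\<lambda>x. csm c (f x))"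
  unfolding csm_def by (intro continuous_intros)

lemma mhol_adj2: "mat_holomorphic_on f S \<Longrightarrow> mat_holomorphic_on (\<lambda>x. adj2 (f x)) S"
  unfolding mat_holomorphic_on_def forall_2 by (simp add: holomorphic_intros)

lemma mhol_refl:
  assumes "mat_holomorphic_on g A" "open A"
  shows "mat_holomorphic_on (\<lambda>z. ctr (g (1 / cnj z))) {z. z \<noteq> 0 \<and> 1 / cnj z \<in> A}"
  using assms unfolding mat_holomorphic_on_def by (auto intro!: refl_hol)

lemma regular:
  assumes V: "V \<in> LoopPlusPos" and hC: "mat_holomorphic_on C (- {0})" and s: "s * s = 1"
    and rel: "\<forall>l\<in>sphere 0 1. ctr (C l) ** sigma3 ** C l = csm s (ctr (V l) ** sigma3 ** V l)"
  shows "\<exists>Vh. mat_holomorphic_on Vh UNIV \<and> (\<forall>l\<in>sphere 0 1. Vh l = V l)"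
proof -
  obtain G where pe: "plus_ext V G" and d1: "\<forall>z\<in>cball 0 1. det (G z) = 1"
    by (rule plus_props[OF V])
  have hG: "mat_holomorphic_on G (ball 0 1)" and cG: "continuous_on (cball 0 1) G"
    and eG: "\<forall>l\<in>sphere 0 1. G l = V l" using pe by (auto simp: plus_ext_def)
  define out where "out = (\<lambda>z. csm s (sigma3 ** adj2 (ctr (G (1 / cnj z))) ** ctr (C (1 / cnj z)) ** sigma3 ** C z))"
  define Out where "Out = {z::complex. 1 < norm z}"
  have oOut: "open Out" by (simp add: Out_def open_Collect_less continuous_on_norm_id)
  have hout: "mat_holomorphic_on out Out"
  proof -
    have a: "mat_holomorphic_on (\<lambda>z. ctr (G (1 / cnj z))) Out"
      by (rule mhol_subset[OF mhol_refl[OF hG]]) (auto simp: Out_def norm_divide divide_less_eq_1)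
    have b: "mat_holomorphic_on (\<lambda>z. ctr (C (1 / cnj z))) Out"
      by (rule mhol_subset[OF mhol_refl[OF hC]]) (auto simp: Out_def)
    have c: "mat_holomorphic_on C Out"
      by (rule mhol_subset[OF hC]) (auto simp: Out_def)
    show ?thesis unfolding out_def
      by (intro mhol_csm mhol_mult mhol_adj2 a b c mhol_const holomorphic_intros)
  qed
  define Ge where "Ge = {z::complex. 1 \<le> norm z}"
  have cout: "continuous_on Ge out"
  proof -
    have i: "continuous_on Ge (\<lambda>z::complex. 1 / cnj z)"
      by (intro continuous_intros) (auto simp: Ge_def)
    have a: "continuous_on Ge (\<lambda>z. G (1 / cnj z))"
      by (rule continuous_on_compose2[OF cG i]) (auto simp: Ge_def norm_divide divide_le_eq_1)
    have cC: "continuous_on (- {0}) C" by (rule mhol_cont[OF hC])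
    have b: "continuous_on Ge (\<lambda>z. C (1 / cnj z))"
      by (rule continuous_on_compose2[OF cC i]) (auto simp: Ge_def)
    have c: "continuous_on Ge C"
      by (rule continuous_on_subset[OF cC]) (auto simp: Ge_def)
    show ?thesis unfolding out_def
      by (intro cont_csm cont_mm cont_adj2 cont_ctr a b c continuous_on_const)
  qed
  have eqs: "out l = V l" if l: "l \<in> sphere 0 1" for l
  proof -
    have il: "1 / cnj l = l" by (rule inv_cnj_sphere'[OF l])
    have dv: "det (V l) = 1" by (rule dV_plus[OF V l])
    then have dcv: "det (ctr (V l)) = 1" by (simp add: det_ctr)
    have "out l = csm s (sigma3 ** minv (ctr (V l)) ** (ctr (C l) ** sigma3 ** C l))"
      unfolding out_def il using eG l dcv by (simp add: minv_adj2 mm_assoc)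
    also have "\<dots> = csm (s * s) (sigma3 ** (minv (ctr (V l)) ** ctr (V l)) ** sigma3 ** V l)"
      using rel l by (simp add: csm_mm_r csm_csm mm_assoc)
    also have "\<dots> = V l" using s dcv by (simp add: minv_l mm_assoc[symmetric] sigma3_sq)
    finally show ?thesis .
  qed
  define Vh where "Vh = (\<lambda>z. if norm z \<le> 1 then G z else out z)"
  have "(\<lambda>z. Vh z $ i $ j) holomorphic_on UNIV" for i j
  proof (rule glue_circle)
    have cc: "continuous_on (cball 0 1 \<union> Ge) (\<lambda>z. if norm z \<le> 1 then G z $ i $ j else out z $ i $ j)"
    proof (rule continuous_on_cases)
      show "closed (cball (0::complex) 1)" by simp
      show "closed Ge" by (simp add: Ge_def closed_Collect_le continuous_on_norm_id)
      show "continuous_on (cball 0 1) (\<lambda>z. G z $ i $ j)" by (rule cont_entry[OF cG])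
      show "continuous_on Ge (\<lambda>z. out z $ i $ j)" by (rule cont_entry[OF cout])
      show "\<forall>x. x \<in> cball 0 1 \<and> \<not> cmod x \<le> 1 \<or> x \<in> Ge \<and> cmod x \<le> 1 \<longrightarrow> G x $ i $ j = out x $ i $ j"
        using eqs eG by (auto simp: Ge_def)
    qed
    have u: "cball 0 1 \<union> Ge = UNIV" by (auto simp: Ge_def)
    have e: "(\<lambda>z. Vh z $ i $ j) = (\<lambda>z. if norm z \<le> 1 then G z $ i $ j else out z $ i $ j)"
      by (simp add: Vh_def fun_eq_iff)
    show "continuous_on UNIV (\<lambda>z. Vh z $ i $ j)"
      unfolding e u[symmetric] by (rule cc)
    have h1: "(\<lambda>z. Vh z $ i $ j) holomorphic_on ball 0 1"
      by (rule holomorphic_transform[OF hol_entry[OF hG]]) (auto simp: Vh_def)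
    have h2: "(\<lambda>z. Vh z $ i $ j) holomorphic_on Out"
      by (rule holomorphic_transform[OF hol_entry[OF hout]]) (auto simp: Vh_def Out_def)
    have "(\<lambda>z. Vh z $ i $ j) holomorphic_on (ball 0 1 \<union> Out)"
      by (rule holomorphic_on_Un[OF h1 h2 _ oOut]) simp
    moreover have "ball 0 1 \<union> Out = UNIV - sphere 0 1" by (auto simp: Out_def)
    ultimately show "(\<lambda>z. Vh z $ i $ j) holomorphic_on (UNIV - sphere 0 1)" by simp
  qed simp
  then have "mat_holomorphic_on Vh UNIV" by (simp add: mat_holomorphic_on_def)
  moreover have "\<forall>l\<in>sphere 0 1. Vh l = V l" using eG by (simp add: Vh_def)
  ultimately show ?thesis by blast
qed



lemma det_minv_nz: "det (A::cmat) \<noteq> 0 \<Longrightarrow> det (minv A) \<noteq> 0"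
proof -
  assume d: "det A \<noteq> 0"
  have "det (minv A ** A) = 1" using d by (simp add: minv_l)
  then show ?thesis by (auto simp: det_mm)
qed

lemma ctr_mm: "ctr ((A::cmat) ** B) = ctr B ** ctr A"
  by (simp add: cmat_eq_iff mult.commute)

lemma point_gen:
  assumes hC1: "mat_holomorphic_on C1 (- {0})" and hC2: "mat_holomorphic_on C2 (- {0})"
    and d1: "\<forall>l\<in>sphere 0 1. det (C1 l) = 1" and d2: "\<forall>l\<in>sphere 0 1. det (C2 l) = 1"
    and R1: "R 1 = mat 1" and mono: "\<forall>l\<in>sphere 0 1. C2 l = R l ** C1 l"
    and V: "V \<in> LoopPlusPos" and s: "s * s = 1"
    and rel: "\<forall>l\<in>sphere 0 1. ctr (C1 l) ** sigma3 ** C1 l = csm s (ctr (V l) ** sigma3 ** V l)"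
    and Fa: "\<forall>l\<in>sphere 0 1. Fa l = C1 l ** minv (V l)"
    and Fb: "\<forall>l\<in>sphere 0 1. Fb l = R l ** Fa l"
  shows "symhat1 Fb = symhat1 Fa \<longleftrightarrow> offd (Xmon R 1) = 0 \<and> diagp (Ymon R 1) = 0"
proof -
  obtain Vh where hV: "mat_holomorphic_on Vh UNIV" and eV: "\<forall>l\<in>sphere 0 1. Vh l = V l"
    using regular[OF V hC1 s rel] by blast
  define P where "P = (\<lambda>x. det (Vh x) * det (C1 x) * det (C2 x))"
  define S where "S = P -` (- {0}) \<inter> (- {0})"
  have hP: "P holomorphic_on (- {0})"
    unfolding P_def by (intro holomorphic_intros mhol_det mhol_subset[OF hV]) (use hC1 hC2 mhol_det in auto)
  have oS: "open S" unfolding S_def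
    using continuous_on_open_vimage[of "- {0}" P] holomorphic_on_imp_continuous_on[OF hP] by auto
  have S_iff: "x \<in> S \<longleftrightarrow> x \<noteq> 0 \<and> det (Vh x) \<noteq> 0 \<and> det (C1 x) \<noteq> 0 \<and> det (C2 x) \<noteq> 0" for x
    by (auto simp: S_def P_def)
  have sS: "sphere 0 1 \<subseteq> S"
  proof
    fix l :: complex assume l: "l \<in> sphere 0 1"
    then have "det (Vh l) = 1" using eV dV_plus[OF V l] by simp
    then show "l \<in> S" using l d1 d2 S_iff by auto
  qed
  have SS: "S \<subseteq> - {0}" using S_iff by auto
  define G where "G = (\<lambda>x. C1 x ** minv (Vh x))"
  define M where "M = (\<lambda>x. C2 x ** minv (C1 x))"
  have hG: "mat_holomorphic_on G S" unfolding G_def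
    by (intro mhol_mult mhol_minv mhol_subset[OF hC1 SS] mhol_subset[OF hV]) (auto simp: S_iff)
  have hM: "mat_holomorphic_on M S" unfolding M_def
    by (intro mhol_mult mhol_minv mhol_subset[OF hC2 SS] mhol_subset[OF hC1 SS]) (auto simp: S_iff)
  have dG: "\<forall>x\<in>S. det (G x) \<noteq> 0" by (auto simp: G_def S_iff det_mm det_minv_nz)
  have dM: "\<forall>x\<in>S. det (M x) \<noteq> 0" by (auto simp: M_def S_iff det_mm det_minv_nz)
  have one: "(1::complex) \<in> sphere 0 1" by simp
  have RM: "\<forall>l\<in>sphere 0 1. R l = M l"
  proof
    fix l :: complex assume l: "l \<in> sphere 0 1"
    have "det (C1 l) \<noteq> 0" using d1 l by simp
    then show "R l = M l" using mono l by (simp add: M_def mm_assoc minv_r)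
  qed
  have M1: "M 1 = mat 1" using RM R1 one by simp
  have FaG: "\<forall>l\<in>sphere 0 1. Fa l = G l" using Fa eV by (simp add: G_def)
  have FbG: "\<forall>l\<in>sphere 0 1. Fb l = M l ** G l" using Fb FaG RM by simp
  show ?thesis by (rule core[OF oS sS hM hG dM dG M1 FaG FbG RM])
qed



lemma point_e:
  assumes z: "z \<in> Ie D C" and tz: "t z \<in> D"
    and C_loop: "\<forall>z\<in>D. C z \<in> LoopSL" and C_hol: "\<forall>z\<in>D. mat_holomorphic_on (C z) (- {0})"
    and mono: "\<forall>l\<in>sphere 0 1. C (t z) l = M l ** C z l" and MSU: "M \<in> LoopSU" and M1: "M 1 = mat 1"
  shows "fhat_e C (t z) = fhat_e C z \<longleftrightarrow> offd (Xmon M 1) = 0 \<and> diagp (Ymon M 1) = 0"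
proof -
  have zD: "z \<in> D" using z by (simp add: Ie_def)
  have ex: "\<exists>F. F \<in> LoopSU \<and> (\<exists>V. V \<in> LoopPlusPos \<and> (\<forall>l\<in>sphere 0 1. C z l = F l ** V l))"
    using z by (auto simp: Ie_def)
  define F where "F = Fe C z"
  have "F \<in> LoopSU \<and> (\<exists>V. V \<in> LoopPlusPos \<and> (\<forall>l\<in>sphere 0 1. C z l = F l ** V l))"
    unfolding F_def Fe_def by (rule someI_ex[OF ex])
  then obtain V where FSU: "F \<in> LoopSU" and V: "V \<in> LoopPlusPos" and CFV: "\<forall>l\<in>sphere 0 1. C z l = F l ** V l"
    by blast
  define MF where "MF = (\<lambda>l. M l ** F l)"
  have MFSU: "MF \<in> LoopSU" unfolding MF_def by (rule LoopSU_mult[OF MSU FSU])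
  have CMF: "\<forall>l\<in>sphere 0 1. C (t z) l = MF l ** V l"
    using mono CFV by (simp add: MF_def mm_assoc)
  have ex': "\<exists>F. F \<in> LoopSU \<and> (\<exists>V. V \<in> LoopPlusPos \<and> (\<forall>l\<in>sphere 0 1. C (t z) l = F l ** V l))"
    using MFSU V CMF by blast
  define F' where "F' = Fe C (t z)"
  have "F' \<in> LoopSU \<and> (\<exists>V. V \<in> LoopPlusPos \<and> (\<forall>l\<in>sphere 0 1. C (t z) l = F' l ** V l))"
    unfolding F'_def Fe_def by (rule someI_ex[OF ex'])
  then obtain V' where F'SU: "F' \<in> LoopSU" and V': "V' \<in> LoopPlusPos" and CF'V: "\<forall>l\<in>sphere 0 1. C (t z) l = F' l ** V' l"
    by blast
  have FF: "\<forall>l\<in>sphere 0 1. F' l = MF l"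
    by (rule iwasawa_e_unique[OF F'SU MFSU V' V]) (use CF'V CMF in simp)
  have rel: "\<forall>l\<in>sphere 0 1. ctr (C z l) ** sigma3 ** C z l = csm 1 (ctr (V l) ** sigma3 ** V l)"
  proof
    fix l :: complex assume l: "l \<in> sphere 0 1"
    have "ctr (C z l) ** sigma3 ** C z l = ctr (V l) ** (ctr (F l) ** sigma3 ** F l) ** V l"
      using CFV l by (simp add: ctr_mm mm_assoc)
    also have "\<dots> = ctr (V l) ** sigma3 ** V l"
      using su2_ctr_sigma LoopSU_D[OF FSU l] by simp
    finally show "ctr (C z l) ** sigma3 ** C z l = csm 1 (ctr (V l) ** sigma3 ** V l)" by simp
  qed
  have Fa: "\<forall>l\<in>sphere 0 1. F l = C z l ** minv (V l)"
  proof
    fix l :: complex assume l: "l \<in> sphere 0 1"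
    show "F l = C z l ** minv (V l)"
      using CFV l dV_plus[OF V l] by (simp add: mm_assoc minv_r)
  qed
  have Fb: "\<forall>l\<in>sphere 0 1. F' l = M l ** F l" using FF by (simp add: MF_def)
  have d1: "\<forall>l\<in>sphere 0 1. det (C z l) = 1" using C_loop zD by (simp add: LoopSL_def)
  have d2: "\<forall>l\<in>sphere 0 1. det (C (t z) l) = 1" using C_loop tz by (simp add: LoopSL_def)
  have "symhat1 F' = symhat1 F \<longleftrightarrow> offd (Xmon M 1) = 0 \<and> diagp (Ymon M 1) = 0"
    by (rule point_gen[OF _ _ d1 d2 M1 mono V _ rel Fa Fb]) (use C_hol zD tz in auto)
  then show ?thesis by (simp add: fhat_e_def F_def F'_def)
qed

lemma point_w:
  assumes z: "z \<in> Iw D C" and tz: "t z \<in> D"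
    and C_loop: "\<forall>z\<in>D. C z \<in> LoopSL" and C_hol: "\<forall>z\<in>D. mat_holomorphic_on (C z) (- {0})"
    and mono: "\<forall>l\<in>sphere 0 1. C (t z) l = M l ** C z l" and MSU: "M \<in> LoopSU" and M1: "M 1 = mat 1"
  shows "fhat_w C (t z) = fhat_w C z \<longleftrightarrow> offd (Xmon M 1) = 0 \<and> diagp (Ymon M 1) = 0"
proof -
  have zD: "z \<in> D" using z by (simp add: Iw_def)
  have ex: "\<exists>F. F \<in> LoopSU \<and> (\<exists>V. V \<in> LoopPlusPos \<and> (\<forall>l\<in>sphere 0 1. C z l = F l ** omega0 l ** V l))"
    using z by (auto simp: Iw_def)
  define F where "F = Fw C z"
  have "F \<in> LoopSU \<and> (\<exists>V. V \<in> LoopPlusPos \<and> (\<forall>l\<in>sphere 0 1. C z l = F l ** omega0 l ** V l))"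
    unfolding F_def Fw_def by (rule someI_ex[OF ex])
  then obtain V where FSU: "F \<in> LoopSU" and V: "V \<in> LoopPlusPos"
    and CFV: "\<forall>l\<in>sphere 0 1. C z l = F l ** omega0 l ** V l"
    by blast
  define MF where "MF = (\<lambda>l. M l ** F l)"
  have MFSU: "MF \<in> LoopSU" unfolding MF_def by (rule LoopSU_mult[OF MSU FSU])
  have CMF: "\<forall>l\<in>sphere 0 1. C (t z) l = MF l ** omega0 l ** V l"
    using mono CFV by (simp add: MF_def mm_assoc)
  have ex': "\<exists>F. F \<in> LoopSU \<and> (\<exists>V. V \<in> LoopPlusPos \<and> (\<forall>l\<in>sphere 0 1. C (t z) l = F l ** omega0 l ** V l))"
    using MFSU V CMF by blast
  define F' where "F' = Fw C (t z)"
  have "F' \<in> LoopSU \<and> (\<exists>V. V \<in> LoopPlusPos \<and> (\<forall>l\<in>sphere 0 1. C (t z) l = F' l ** omega0 l ** V l))"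
    unfolding F'_def Fw_def by (rule someI_ex[OF ex'])
  then obtain V' where F'SU: "F' \<in> LoopSU" and V': "V' \<in> LoopPlusPos"
    and CF'V: "\<forall>l\<in>sphere 0 1. C (t z) l = F' l ** omega0 l ** V' l"
    by blast
  have FF: "\<forall>l\<in>sphere 0 1. F' l = MF l"
    by (rule iwasawa_w_unique[OF F'SU MFSU V' V]) (use CF'V CMF in simp)
  have rel: "\<forall>l\<in>sphere 0 1. ctr (C z l) ** sigma3 ** C z l = csm (-1) (ctr (V l) ** sigma3 ** V l)"
  proof
    fix l :: complex assume l: "l \<in> sphere 0 1"
    have "ctr (C z l) ** sigma3 ** C z l
        = ctr (V l) ** (ctr (omega0 l) ** (ctr (F l) ** sigma3 ** F l) ** omega0 l) ** V l"
      using CFV l by (simp add: ctr_mm mm_assoc)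
    also have "\<dots> = ctr (V l) ** (ctr (omega0 l) ** sigma3 ** omega0 l) ** V l"
      using su2_ctr_sigma LoopSU_D[OF FSU l] by simp
    also have "\<dots> = csm (-1) (ctr (V l) ** sigma3 ** V l)"
      using omega_reality[OF l] by (simp add: csm_mm_l csm_mm_r mm_assoc)
    finally show "ctr (C z l) ** sigma3 ** C z l = csm (-1) (ctr (V l) ** sigma3 ** V l)" .
  qed
  have Fa: "\<forall>l\<in>sphere 0 1. F l ** omega0 l = C z l ** minv (V l)"
  proof
    fix l :: complex assume l: "l \<in> sphere 0 1"
    show "F l ** omega0 l = C z l ** minv (V l)"
      using CFV l dV_plus[OF V l] by (simp add: mm_assoc minv_r)
  qed
  have Fb: "\<forall>l\<in>sphere 0 1. F' l ** omega0 l = M l ** (F l ** omega0 l)" using FF by (simp add: MF_def mm_assoc)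
  have d1: "\<forall>l\<in>sphere 0 1. det (C z l) = 1" using C_loop zD by (simp add: LoopSL_def)
  have d2: "\<forall>l\<in>sphere 0 1. det (C (t z) l) = 1" using C_loop tz by (simp add: LoopSL_def)
  have "symhat1 (\<lambda>l. F' l ** omega0 l) = symhat1 (\<lambda>l. F l ** omega0 l) \<longleftrightarrow> offd (Xmon M 1) = 0 \<and> diagp (Ymon M 1) = 0"
    by (rule point_gen[OF _ _ d1 d2 M1 mono V _ rel]) (use C_hol zD tz Fa Fb in auto)
  then show ?thesis by (simp add: fhat_w_def F_def F'_def)
qed


theorem mainTheorem7:
  fixes D :: "complex set" and \<Gamma> :: "(complex \<Rightarrow> complex) set"
    and A :: "complex \<Rightarrow> cloop" and C :: "complex \<Rightarrow> cloop"
    and \<rho> :: "(complex \<Rightarrow> complex) \<Rightarrow> cloop"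
  assumes D: "open D" "connected D" "simply_connected D"
    and deck: "deck_group D \<Gamma>" and noncpt: "noncompact_quotient D \<Gamma>"
    and A_hol_z: "\<forall>l\<in>- {0}. \<forall>i j. (\<lambda>z. A z l $ i $ j) holomorphic_on D"
    and A_hol_lambda: "\<forall>z\<in>D. mat_holomorphic_on (A z) (- {0})"
    and A_alg: "\<forall>z\<in>D. A z \<in> LoopAlg"
    and A_inv: "\<forall>\<tau>\<in>\<Gamma>. \<forall>z\<in>D. \<forall>l\<in>- {0}. csm (deriv \<tau> z) (A (\<tau> z) l) = A z l"
    and C_loop: "\<forall>z\<in>D. C z \<in> LoopSL"
    and C_hol_lambda: "\<forall>z\<in>D. mat_holomorphic_on (C z) (- {0})"
    and C_ode: "\<forall>l\<in>- {0}. \<forall>z\<in>D. \<forall>i j.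
                  ((\<lambda>w. C w l $ i $ j) has_field_derivative ((C z l ** A z l) $ i $ j)) (at z)"
    and C_mono: "\<forall>\<tau>\<in>\<Gamma>. \<forall>z\<in>D. \<forall>l\<in>sphere 0 1. C (\<tau> z) l = \<rho> \<tau> l ** C z l"
    and M_SU: "\<forall>\<tau>\<in>\<Gamma>. \<rho> \<tau> \<in> LoopSU"
    and M_one: "\<forall>\<tau>\<in>\<Gamma>. \<rho> \<tau> 1 = mat 1"
  shows "(Ie D C \<noteq> {} \<longrightarrow>
            ((\<forall>\<tau>\<in>\<Gamma>. \<forall>z\<in>Ie D C. fhat_e C (\<tau> z) = fhat_e C z) \<longleftrightarrow>
             (\<forall>\<tau>\<in>\<Gamma>. offd (Xmon (\<rho> \<tau>) 1) = 0 \<and> diagp (Ymon (\<rho> \<tau>) 1) = 0)))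
       \<and> (Iw D C \<noteq> {} \<longrightarrow>
            ((\<forall>\<tau>\<in>\<Gamma>. \<forall>z\<in>Iw D C. fhat_w C (\<tau> z) = fhat_w C z) \<longleftrightarrow>
             (\<forall>\<tau>\<in>\<Gamma>. offd (Xmon (\<rho> \<tau>) 1) = 0 \<and> diagp (Ymon (\<rho> \<tau>) 1) = 0)))"
  proof -
  have img: "\<tau> z \<in> D" if "\<tau> \<in> \<Gamma>" "z \<in> D" for \<tau> z
    using deck that unfolding deck_group_def by blast
  have mono: "\<forall>l\<in>sphere 0 1. C (\<tau> z) l = \<rho> \<tau> l ** C z l" if "\<tau> \<in> \<Gamma>" "z \<in> D" for \<tau> z
    using C_mono that by blast
  have pe: "fhat_e C (\<tau> z) = fhat_e C z \<longleftrightarrow> offd (Xmon (\<rho> \<tau>) 1) = 0 \<and> diagp (Ymon (\<rho> \<tau>) 1) = 0"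
    if "\<tau> \<in> \<Gamma>" "z \<in> Ie D C" for \<tau> z
  proof -
    have zD: "z \<in> D" using that by (simp add: Ie_def)
    show ?thesis
      by (rule point_e[where z=z and t=\<tau> and D=D and C=C and M="\<rho> \<tau>", OF that(2) img[OF that(1) zD] C_loop C_hol_lambda mono[OF that(1) zD]])
         (use M_SU M_one that in auto)
  qed
  have pw: "fhat_w C (\<tau> z) = fhat_w C z \<longleftrightarrow> offd (Xmon (\<rho> \<tau>) 1) = 0 \<and> diagp (Ymon (\<rho> \<tau>) 1) = 0"
    if "\<tau> \<in> \<Gamma>" "z \<in> Iw D C" for \<tau> z
  proof -
    have zD: "z \<in> D" using that by (simp add: Iw_def)
    show ?thesis
      by (rule point_w[where z=z and t=\<tau> and D=D and C=C and M="\<rho> \<tau>", OF that(2) img[OF that(1) zD] C_loop C_hol_lambda mono[OF that(1) zD]])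
         (use M_SU M_one that in auto)
  qed
  show ?thesis
  proof (intro conjI impI)
    assume "Ie D C \<noteq> {}"
    then obtain z0 where z0: "z0 \<in> Ie D C" by blast
    show "(\<forall>\<tau>\<in>\<Gamma>. \<forall>z\<in>Ie D C. fhat_e C (\<tau> z) = fhat_e C z) \<longleftrightarrow>
          (\<forall>\<tau>\<in>\<Gamma>. offd (Xmon (\<rho> \<tau>) 1) = 0 \<and> diagp (Ymon (\<rho> \<tau>) 1) = 0)"
      using pe z0 by blast
  next
    assume "Iw D C \<noteq> {}"
    then obtain z0 where z0: "z0 \<in> Iw D C" by blast
    show "(\<forall>\<tau>\<in>\<Gamma>. \<forall>z\<in>Iw D C. fhat_w C (\<tau> z) = fhat_w C z) \<longleftrightarrow>
          (\<forall>\<tau>\<in>\<Gamma>. offd (Xmon (\<rho> \<tau>) 1) = 0 \<and> diagp (Ymon (\<rho> \<tau>) 1) = 0)"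
      using pw z0 by blast
  qed
qed

end
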